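(* Let $\mathcal{M}_0$ be the set of all probability distributions on $\mathbb{R}$ and let $T:\mathcal{M}_0\to\mathcal{M}_0$ be monotone. (i) $\mathcal{U}\circ T=T\circ\mathcal{U}$ if and only if $T=T_d\circ T^u$ for some $d\in\widehat{\mathcal{F}_D}$ and some strictly increasing surjective $u:\mathbb{R}\to\mathbb{R}$. (ii) $\mathcal{D}'\circ T=T\circ\mathcal{D}'$ if and only if $T=T_d\circ T^u$ for some increasing left-continuous $u:\mathbb{R}\to\mathbb{R}$ and some strictly increasing continuous $d\in\widehat{\mathcal{F}_D}$.
   Context: Increasing means non-decreasing. $\widehat{\mathcal{F}_D}$ is the set of increasing $d:[0,1]\to[0,1]$ with $d(0)=\lim_{x\downarrow0}d(x)=0$ and $d(1)=\lim_{x\uparrow1}d(x)=1$; $T_d(F)(x)=\lim_{y\downarrow x}d(F(y))$. For increasing $u$, $T^u(F)$ is the distribution of $u(X)$ when $X\sim F$. $\mathcal{U}=\{T^u: u:\mathbb{R}\to\mathbb{R}\text{ increasing and continuous}\}$ and $\mathcal{D}'=\{T_d: d\in\widehat{\mathcal{F}_D}\text{ right-continuous}\}$. For a set $\mathcal{T}$ of maps, $\mathcal{T}\circ T=\{T'\circ T:T'\in\mathcal{T}\}$, $T\circ\mathcal{T}=\{T\circ T':T'\in\mathcal{T}\}$. $F\le_{\rm st}G$ means $F(x)\ge G(x)$ for all $x$; $T$ is monotone if $F\le_{\rm st}G$ implies $T(F)\le_{\rm st}T(G)$. *)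

theory Defs
  imports "HOL-Analysis.Analysis"
begin

text \<open>Probability distributions on the reals are represented by their distribution
  functions (CDFs).\<close>
definition M0 :: "(real \<Rightarrow> real) set" where
  "M0 = {F. mono F \<and> (\<forall>x. continuous (at_right x) F)
          \<and> (F \<longlongrightarrow> 0) at_bot \<and> (F \<longlongrightarrow> 1) at_top}"

definition st_le :: "(real \<Rightarrow> real) \<Rightarrow> (real \<Rightarrow> real) \<Rightarrow> bool" where
  "st_le F G \<longleftrightarrow> (\<forall>x. F x \<ge> G x)"

definition monotone_map :: "((real \<Rightarrow> real) \<Rightarrow> (real \<Rightarrow> real)) \<Rightarrow> bool" where
  "monotone_map T \<longleftrightarrow> (\<forall>F\<in>M0. \<forall>G\<in>M0. st_le F G \<longrightarrow> st_le (T F) (T G))"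

text \<open>The class of distortion functions on [0,1] (only values on [0,1] matter).\<close>
definition hatFD :: "(real \<Rightarrow> real) set" where
  "hatFD = {d. mono_on {0..1} d \<and> d ` {0..1} \<subseteq> {0..1}
              \<and> d 0 = 0 \<and> (d \<longlongrightarrow> 0) (at_right 0)
              \<and> d 1 = 1 \<and> (d \<longlongrightarrow> 1) (at_left 1)}"

definition TD :: "(real \<Rightarrow> real) \<Rightarrow> (real \<Rightarrow> real) \<Rightarrow> (real \<Rightarrow> real)" where
  "TD d F = (\<lambda>x. Lim (at_right x) (\<lambda>y. d (F y)))"

text \<open>T^u(F): the distribution function of u(X) where X has distribution function F;
  the law of X is the measure interval_measure F.\<close>
definition TU :: "(real \<Rightarrow> real) \<Rightarrow> (real \<Rightarrow> real) \<Rightarrow> (real \<Rightarrow> real)" where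
  "TU u F = (\<lambda>y. measure (distr (interval_measure F) borel u) {..y})"

definition Ucal :: "((real \<Rightarrow> real) \<Rightarrow> (real \<Rightarrow> real)) set" where
  "Ucal = {TU u | u. mono u \<and> continuous_on UNIV u}"

definition Dcal' :: "((real \<Rightarrow> real) \<Rightarrow> (real \<Rightarrow> real)) set" where
  "Dcal' = {TD d | d. d \<in> hatFD \<and> (\<forall>x\<in>{0..<1}. (d \<longlongrightarrow> d x) (at_right x))}"

text \<open>Compositions of maps M0 \<rightarrow> M0, identified as maps on M0 (restricted to M0).\<close>
definition comp_left :: "((real \<Rightarrow> real) \<Rightarrow> (real \<Rightarrow> real)) set \<Rightarrow> ((real \<Rightarrow> real) \<Rightarrow> (real \<Rightarrow> real))
    \<Rightarrow> ((real \<Rightarrow> real) \<Rightarrow> (real \<Rightarrow> real)) set" where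
  "comp_left \<T> T = {restrict (\<lambda>F. T' (T F)) M0 | T'. T' \<in> \<T>}"

definition comp_right :: "((real \<Rightarrow> real) \<Rightarrow> (real \<Rightarrow> real)) \<Rightarrow> ((real \<Rightarrow> real) \<Rightarrow> (real \<Rightarrow> real)) set
    \<Rightarrow> ((real \<Rightarrow> real) \<Rightarrow> (real \<Rightarrow> real)) set" where
  "comp_right T \<T> = {restrict (\<lambda>F. T (T' F)) M0 | T'. T' \<in> \<T>}"

end

theory Submission
  imports Defs "HOL-Probability.Probability"
begin



lemma M0D:
  assumes "F \<in> M0"
  shows "mono F" "\<And>x. continuous (at_right x) F" "(F \<longlongrightarrow> 0) at_bot" "(F \<longlongrightarrow> 1) at_top"
  using assms by (auto simp: M0_def)

lemma M0_nonneg: assumes "F \<in> M0" shows "0 \<le> F x"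
proof -
  have "(F \<longlongrightarrow> 0) at_bot" "mono F" using M0D[OF assms] by auto
  then show ?thesis
    by (intro tendsto_upperbound[of F 0 at_bot]) (auto simp: eventually_at_bot_linorder mono_def intro!: exI[of _ x])
qed

lemma M0_le1: assumes "F \<in> M0" shows "F x \<le> 1"
proof -
  have "(F \<longlongrightarrow> 1) at_top" "mono F" using M0D[OF assms] by auto
  then show ?thesis
    by (intro tendsto_lowerbound[of F 1 at_top]) (auto simp: eventually_at_top_linorder mono_def intro!: exI[of _ x])
qed

lemma M0_real_dist: assumes "F \<in> M0" shows "real_distribution (interval_measure F)"
  using M0D[OF assms] by (intro real_distribution_interval_measure) (auto simp: mono_def)

lemma M0_meas_Iic: assumes "F \<in> M0" shows "measure (interval_measure F) {..x} = F x"
  using M0D[OF assms] by (intro measure_interval_measure_Iic) (auto simp: mono_def)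

lemma M0_cdf: assumes "F \<in> M0" shows "cdf (interval_measure F) = F"
  using M0_meas_Iic[OF assms] by (auto simp: cdf_def)

lemma cdf_M0: assumes "real_distribution M" shows "cdf M \<in> M0"
proof -
  interpret real_distribution M by fact
  show ?thesis unfolding M0_def
    using cdf_nondecreasing cdf_is_right_cont cdf_lim_at_bot cdf_lim_at_top_prob
    by (auto simp: mono_def)
qed

lemma TU_cdf: "TU v F = cdf (distr (interval_measure F) borel v)"
  by (simp add: TU_def cdf_def)

lemma TU_dist: assumes "F \<in> M0" "v \<in> borel_measurable borel"
  shows "real_distribution (distr (interval_measure F) borel v)"
proof -
  interpret real_distribution "interval_measure F" using M0_real_dist[OF assms(1)] .
  show ?thesis using assms(2) by (intro real_distribution_distr) (simp add: measurable_def)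
qed

lemma TU_M0: assumes "F \<in> M0" "v \<in> borel_measurable borel" shows "TU v F \<in> M0"
  unfolding TU_cdf by (rule cdf_M0[OF TU_dist[OF assms]])

lemma TU_eq: assumes "F \<in> M0" "v \<in> borel_measurable borel"
  shows "TU v F y = measure (interval_measure F) {x. v x \<le> y}"
proof -
  have m: "v \<in> measurable (interval_measure F) borel" using assms(2) by (simp add: measurable_def)
  have "TU v F y = measure (distr (interval_measure F) borel v) {..y}" by (simp add: TU_def)
  also have "\<dots> = measure (interval_measure F) (v -` {..y} \<inter> space (interval_measure F))"
    by (rule measure_distr[OF m]) simp
  also have "v -` {..y} \<inter> space (interval_measure F) = {x. v x \<le> y}" by auto
  finally show ?thesis .
qed

lemma TU_interval: assumes "F \<in> M0" "v \<in> borel_measurable borel"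
  shows "interval_measure (TU v F) = distr (interval_measure F) borel v"
proof (rule cdf_unique)
  show "real_distribution (interval_measure (TU v F))" by (rule M0_real_dist[OF TU_M0[OF assms]])
  show "real_distribution (distr (interval_measure F) borel v)" by (rule TU_dist[OF assms])
  show "cdf (interval_measure (TU v F)) = cdf (distr (interval_measure F) borel v)"
    using M0_cdf[OF TU_M0[OF assms]] by (simp add: TU_cdf)
qed

lemma TU_comp: assumes "F \<in> M0" "v \<in> borel_measurable borel" "w \<in> borel_measurable borel"
  shows "TU w (TU v F) = TU (w \<circ> v) F"
proof -
  have m: "v \<in> measurable (interval_measure F) borel" using assms(2) by (simp add: measurable_def)
  have "distr (distr (interval_measure F) borel v) borel w = distr (interval_measure F) borel (w \<circ> v)"
    by (rule distr_distr[OF assms(3) m])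
  have "TU w (TU v F) = (\<lambda>y. measure (distr (interval_measure (TU v F)) borel w) {..y})"
    unfolding TU_def[of w "TU v F"] ..
  also have "\<dots> = (\<lambda>y. measure (distr (interval_measure F) borel (w \<circ> v)) {..y})"
    using TU_interval[OF assms(1,2)] \<open>distr (distr _ _ _) _ _ = _\<close> by simp
  finally show ?thesis by (simp add: TU_def)
qed

lemma TU_id: assumes "F \<in> M0" shows "TU (\<lambda>x. x) F = F"
proof
  fix y show "TU (\<lambda>x. x) F y = F y"
    using TU_eq[OF assms, of "\<lambda>x. x" y] M0_meas_Iic[OF assms, of y] by (simp add: atMost_def)
qed

definition delta :: "real \<Rightarrow> real \<Rightarrow> real" where
  "delta x = (\<lambda>y. if x \<le> y then 1 else 0)"

lemma delta_M0: "delta x \<in> M0"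
proof -
  have "cdf (return borel x) = delta x"
    by (auto simp: cdf_def delta_def measure_return indicator_def)
  moreover have "real_distribution (return borel x)"
    unfolding real_distribution_def real_distribution_axioms_def by (auto intro: prob_space_return)
  ultimately show ?thesis using cdf_M0 by metis
qed

lemma delta_interval: "interval_measure (delta x) = return borel x"
proof (rule cdf_unique)
  show "real_distribution (interval_measure (delta x))" by (rule M0_real_dist[OF delta_M0])
  show "real_distribution (return borel x)"
    unfolding real_distribution_def real_distribution_axioms_def by (auto intro: prob_space_return)
  show "cdf (interval_measure (delta x)) = cdf (return borel x)"
    by (simp add: M0_cdf[OF delta_M0]) (auto simp: cdf_def delta_def measure_return indicator_def)
qed

lemma TU_delta: assumes "w \<in> borel_measurable borel" shows "TU w (delta x) = delta (w x)"
proof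
  fix y
  have "{z. w z \<le> y} \<in> sets borel" using assms by measurable
  have "TU w (delta x) y = measure (return borel x) {z. w z \<le> y}"
    using TU_eq[OF delta_M0 assms, of x y] delta_interval[of x] by simp
  then show "TU w (delta x) y = delta (w x) y"
    using \<open>_ \<in> sets borel\<close> by (simp add: measure_return delta_def indicator_def)
qed

lemma delta_inj: "delta x = delta y \<Longrightarrow> x = y"
  unfolding delta_def by (metis order.refl one_neq_zero order.antisym)

lemma mono_meas: "mono (v::real\<Rightarrow>real) \<Longrightarrow> v \<in> borel_measurable borel"
  by (rule borel_measurable_mono)




lemma downset_closed:
  fixes v :: "real \<Rightarrow> real"
  assumes mv: "mono v" and lc: "\<And>x. continuous (at_left x) v"
    and ne: "{z. v z \<le> y} \<noteq> {}" and nu: "{z. v z \<le> y} \<noteq> UNIV"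
  shows "{z. v z \<le> y} = {..Sup {z. v z \<le> y}}" "bdd_above {z. v z \<le> y}"
proof -
  let ?S = "{z. v z \<le> y}"
  obtain z0 where "\<not> v z0 \<le> y" using nu by blast
  then have z0: "v z0 > y" by simp
  have lt: "s < z0" if "s \<in> ?S" for s
  proof (rule ccontr)
    assume "\<not> s < z0" then have "v z0 \<le> v s" using mv by (auto simp: mono_def)
    with that z0 show False by auto
  qed
  show bdd: "bdd_above ?S" using lt by (auto intro!: bdd_aboveI[of _ z0] less_imp_le)
  let ?a = "Sup ?S"
  have dn: "z \<in> ?S" if "z \<le> s" "s \<in> ?S" for z s
    using that mv by (auto simp: mono_def intro: order_trans)
  have va: "v ?a \<le> y"
  proof -
    have "(v \<longlongrightarrow> v ?a) (at_left ?a)" using lc[of ?a] by (simp add: continuous_within)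
    moreover have "eventually (\<lambda>z. v z \<le> y) (at_left ?a)"
    proof -
      have "\<forall>z<?a. v z \<le> y"
      proof (intro allI impI)
        fix z assume "z < ?a"
        then obtain s where "s \<in> ?S" "z < s" using less_cSup_iff[OF ne bdd] by auto
        then show "v z \<le> y" using dn[of z s] by auto
      qed
      then show ?thesis by (auto simp: eventually_at_left_field intro!: exI[of _ "?a - 1"])
    qed
    ultimately show ?thesis by (rule tendsto_upperbound) simp
  qed
  show "?S = {..?a}"
  proof (intro equalityI subsetI)
    fix z assume "z \<in> ?S" then show "z \<in> {..?a}" using cSup_upper[OF _ bdd] by auto
  next
    fix z assume "z \<in> {..?a}" then show "z \<in> ?S" using dn[of z ?a] va by auto
  qed
qed

lemma TU_formula:
  fixes v :: "real \<Rightarrow> real"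
  assumes F: "F \<in> M0" and mv: "mono v" and lc: "\<And>x. continuous (at_left x) v"
  shows "TU v F y = (if {z. v z \<le> y} = {} then 0 else if {z. v z \<le> y} = UNIV then 1
                     else F (Sup {z. v z \<le> y}))"
proof -
  interpret real_distribution "interval_measure F" by (rule M0_real_dist[OF F])
  have e: "TU v F y = measure (interval_measure F) {z. v z \<le> y}"
    by (rule TU_eq[OF F mono_meas[OF mv]])
  show ?thesis
  proof (cases "{z. v z \<le> y} = {}")
    case True then show ?thesis using e by simp
  next
    case ne: False
    show ?thesis
    proof (cases "{z. v z \<le> y} = UNIV")
      case True then show ?thesis using e ne prob_space by simp
    next
      case False
      define S where "S = {z. v z \<le> y}"
      have "S = {..Sup S}" unfolding S_def by (rule downset_closed(1)[OF mv lc ne False])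
      then have "prob S = F (Sup S)" using M0_meas_Iic[OF F, of "Sup S"] by metis
      then show ?thesis using e ne False unfolding S_def by (simp only: if_False)
    qed
  qed
qed

lemma cont_left: "continuous_on UNIV (v::real\<Rightarrow>real) \<Longrightarrow> continuous (at_left x) v"
  by (simp add: continuous_on_eq_continuous_within continuous_at_split)

lemma rc_comp:
  fixes e f :: "real \<Rightarrow> real"
  assumes e: "(e \<longlongrightarrow> e a) (at_right a)" and f: "(f \<longlongrightarrow> a) Fl" and ge: "eventually (\<lambda>y. f y \<ge> a) Fl"
  shows "((\<lambda>y. e (f y)) \<longlongrightarrow> e a) Fl"
proof (rule tendstoI)
  fix \<epsilon> :: real assume "\<epsilon> > 0"
  then have "eventually (\<lambda>t. dist (e t) (e a) < \<epsilon>) (at_right a)" using e tendstoD by blast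
  then obtain b where b: "b > a" "\<And>t. t > a \<Longrightarrow> t < b \<Longrightarrow> dist (e t) (e a) < \<epsilon>"
    by (auto simp: eventually_at_right_field)
  have "eventually (\<lambda>y. dist (f y) a < b - a) Fl" using tendstoD[OF f, of "b - a"] b(1) by simp
  then show "eventually (\<lambda>y. dist (e (f y)) (e a) < \<epsilon>) Fl"
    using ge
  proof eventually_elim
    case (elim y)
    show ?case
    proof (cases "f y = a")
      case True then show ?thesis using \<open>\<epsilon> > 0\<close> by simp
    next
      case False then show ?thesis using elim b(2)[of "f y"] by (auto simp: dist_real_def)
    qed
  qed
qed

definition rcont :: "(real \<Rightarrow> real) \<Rightarrow> bool" where
  "rcont e \<longleftrightarrow> (\<forall>x\<in>{0..<1}. (e \<longlongrightarrow> e x) (at_right x))"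

lemma Dcal'_iff: "T' \<in> Dcal' \<longleftrightarrow> (\<exists>d. T' = TD d \<and> d \<in> hatFD \<and> rcont d)"
  by (auto simp: Dcal'_def rcont_def)

lemma hatFD_D:
  assumes "d \<in> hatFD"
  shows "mono_on {0..1} d" "\<And>x. x \<in> {0..1} \<Longrightarrow> d x \<in> {0..1}" "d 0 = 0" "d 1 = 1"
    "(d \<longlongrightarrow> 0) (at_right 0)" "(d \<longlongrightarrow> 1) (at_left 1)"
  using assms unfolding hatFD_def by (auto simp: image_subset_iff)

lemma M0_right: assumes "F \<in> M0" shows "(F \<longlongrightarrow> F x) (at_right x)"
  using M0D(2)[OF assms, of x] by (simp add: continuous_within)

lemma M0_ev_ge: assumes "F \<in> M0" shows "eventually (\<lambda>y. F y \<ge> F x) (at_right x)"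
  using M0D(1)[OF assms] by (auto simp: eventually_at_right_field mono_def intro!: exI[of _ "x+1"])

lemma TD_rc:
  assumes F: "F \<in> M0" and d: "d \<in> hatFD" and rc: "rcont d"
  shows "TD d F = (\<lambda>x. d (F x))"
proof
  fix x
  have lim: "((\<lambda>y. d (F y)) \<longlongrightarrow> d (F x)) (at_right x)"
  proof (cases "F x = 1")
    case True
    have "eventually (\<lambda>y. F y = 1) (at_right x)"
      using M0_ev_ge[OF F, of x]
    proof eventually_elim
      case (elim y) then show ?case using M0_le1[OF F, of y] True by linarith
    qed
    then have "eventually (\<lambda>y. d (F y) = d (F x)) (at_right x)" using True by (auto elim: eventually_mono)
    then show ?thesis by (rule tendsto_eventually)
  next
    case False
    then have "F x \<in> {0..<1}" using M0_nonneg[OF F] M0_le1[OF F] by (auto simp: less_le)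
    then have "(d \<longlongrightarrow> d (F x)) (at_right (F x))" using rc by (auto simp: rcont_def)
    then show ?thesis by (rule rc_comp[OF _ M0_right[OF F] M0_ev_ge[OF F]])
  qed
  show "TD d F x = d (F x)" unfolding TD_def by (rule tendsto_Lim[OF _ lim]) simp
qed

lemma cont_rcont:
  assumes "continuous_on {0..1} d" shows "rcont d"
  unfolding rcont_def
proof
  fix x :: real assume x: "x \<in> {0..<1}"
  have "continuous_on {x..1} d" using assms by (rule continuous_on_subset) (use x in auto)
  then show "(d \<longlongrightarrow> d x) (at_right x)" by (rule continuous_on_Icc_at_rightD) (use x in auto)
qed

lemma TD_01:
  assumes P: "P \<in> M0" and P01: "\<And>x. P x = 0 \<or> P x = 1" and d: "d \<in> hatFD"
  shows "TD d P = P"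
proof
  fix x
  have "(\<lambda>y. d (P y)) = P"
  proof
    fix y show "d (P y) = P y" using P01[of y] hatFD_D(3,4)[OF d] by (cases "P y = 0") auto
  qed
  then show "TD d P x = P x" unfolding TD_def using tendsto_Lim[OF _ M0_right[OF P]] by simp
qed

lemma TD_delta: "d \<in> hatFD \<Longrightarrow> TD d (delta x) = delta x"
  by (rule TD_01[OF delta_M0]) (auto simp: delta_def)




lemma mono_rlim_char:
  fixes \<psi> :: "real \<Rightarrow> real"
  assumes mono: "\<And>s t. y < s \<Longrightarrow> s \<le> t \<Longrightarrow> \<psi> s \<le> \<psi> t"
    and lo: "\<And>s. s > y \<Longrightarrow> \<psi> s \<ge> L"
    and up: "\<And>\<epsilon>. \<epsilon> > 0 \<Longrightarrow> \<exists>s>y. \<psi> s < L + \<epsilon>"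
  shows "(\<psi> \<longlongrightarrow> L) (at_right y)"
proof (rule tendstoI)
  fix \<epsilon> :: real assume "\<epsilon> > 0"
  then obtain s where s: "s > y" "\<psi> s < L + \<epsilon>" using up by blast
  show "eventually (\<lambda>t. dist (\<psi> t) L < \<epsilon>) (at_right y)"
    unfolding eventually_at_right_field
  proof (intro exI[of _ s] conjI allI impI)
    fix t assume "t > y" "t < s"
    then have "L \<le> \<psi> t" "\<psi> t \<le> \<psi> s" using lo mono[of t s] by auto
    then show "dist (\<psi> t) L < \<epsilon>" using s \<open>\<epsilon> > 0\<close> by (simp add: dist_real_def)
  qed (use s in auto)
qed

lemma mono_rlim_ex:
  fixes \<phi> :: "real \<Rightarrow> real"
  assumes mono: "\<And>s t. s \<le> t \<Longrightarrow> \<phi> s \<le> \<phi> t" and bd: "\<And>s. \<phi> s \<ge> 0"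
  shows "(\<phi> \<longlongrightarrow> Inf (\<phi> ` {a<..})) (at_right a)"
proof (rule mono_rlim_char)
  have bdd: "bdd_below (\<phi> ` {a<..})" using bd by (auto intro: bdd_belowI[of _ 0])
  show "\<phi> s \<ge> Inf (\<phi> ` {a<..})" if "s > a" for s
    using that by (intro cInf_lower[OF _ bdd]) auto
  show "\<exists>s>a. \<phi> s < Inf (\<phi> ` {a<..}) + \<epsilon>" if "\<epsilon> > 0" for \<epsilon>
  proof -
    have "Inf (\<phi> ` {a<..}) < Inf (\<phi> ` {a<..}) + \<epsilon>" using that by simp
    then obtain z where "z \<in> \<phi> ` {a<..}" "z < Inf (\<phi> ` {a<..}) + \<epsilon>"
      using cInf_less_iff[OF _ bdd] by (metis empty_iff greaterThan_iff gt_ex image_is_empty)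
    then show ?thesis by auto
  qed
qed (use mono in auto)

lemma dG_mono:
  assumes G: "G \<in> M0" and d: "d \<in> hatFD"
  shows "\<And>s t. s \<le> t \<Longrightarrow> d (G s) \<le> d (G t)" "\<And>s. 0 \<le> d (G s)" "\<And>s. d (G s) \<le> 1"
proof -
  fix s t :: real assume "s \<le> t"
  then have "G s \<le> G t" using M0D(1)[OF G] by (auto simp: mono_def)
  then show "d (G s) \<le> d (G t)"
    using hatFD_D(1)[OF d] M0_nonneg[OF G] M0_le1[OF G] by (auto simp: mono_on_def)
next
  fix s show "0 \<le> d (G s)" "d (G s) \<le> 1" using hatFD_D(2)[OF d, of "G s"] M0_nonneg[OF G] M0_le1[OF G] by auto
qed

lemma TD_lim:
  assumes G: "G \<in> M0" and d: "d \<in> hatFD"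
  shows "((\<lambda>y. d (G y)) \<longlongrightarrow> TD d G x) (at_right x)"
proof -
  have "((\<lambda>y. d (G y)) \<longlongrightarrow> Inf ((\<lambda>y. d (G y)) ` {x<..})) (at_right x)"
    by (rule mono_rlim_ex) (use dG_mono[OF G d] in auto)
  moreover then have "TD d G x = Inf ((\<lambda>y. d (G y)) ` {x<..})"
    unfolding TD_def by (intro tendsto_Lim) auto
  ultimately show ?thesis by simp
qed

lemma TU_TD_comm:
  fixes v :: "real \<Rightarrow> real"
  assumes G: "G \<in> M0" and d: "d \<in> hatFD" and H: "TD d G \<in> M0"
    and mv: "mono v" and cv: "continuous_on UNIV v"
  shows "TU v (TD d G) = TD d (TU v G)"
proof
  fix y
  have lc: "\<And>x. continuous (at_left x) v" using cv by (rule cont_left)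
  have VG: "TU v G \<in> M0" by (rule TU_M0[OF G mono_meas[OF mv]])
  let ?A = "\<lambda>y. {z. v z \<le> y}"
  let ?\<psi> = "\<lambda>y. d (TU v G y)"
  have lim: "(?\<psi> \<longlongrightarrow> TD d (TU v G) y) (at_right y)" by (rule TD_lim[OF VG d])
  have fH: "TU v (TD d G) y = (if ?A y = {} then 0 else if ?A y = UNIV then 1 else TD d G (Sup (?A y)))"
    by (rule TU_formula[OF H mv lc])
  have fG: "\<And>y. TU v G y = (if ?A y = {} then 0 else if ?A y = UNIV then 1 else G (Sup (?A y)))"
    by (rule TU_formula[OF G mv lc])
  show "TU v (TD d G) y = TD d (TU v G) y"
  proof (cases "?A y = {}")
    case True
    have "TU v G y = 0" using fG[of y] True by simp
    have "(?\<psi> \<longlongrightarrow> d 0) (at_right y)"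
    proof (rule rc_comp[of d 0 "TU v G"])
      show "(d \<longlongrightarrow> d 0) (at_right 0)" using hatFD_D(3,5)[OF d] by simp
      show "(TU v G \<longlongrightarrow> 0) (at_right y)" using M0_right[OF VG, of y] \<open>TU v G y = 0\<close> by simp
      show "eventually (\<lambda>s. TU v G s \<ge> 0) (at_right y)" using M0_nonneg[OF VG] by simp
    qed
    then have "TD d (TU v G) y = 0" using tendsto_unique[OF _ lim] hatFD_D(3)[OF d] by force
    then show ?thesis using fH True by simp
  next
    case ne: False
    show ?thesis
    proof (cases "?A y = UNIV")
      case True
      have "eventually (\<lambda>s. ?\<psi> s = 1) (at_right y)"
        unfolding eventually_at_right_field
      proof (intro exI[of _ "y+1"] conjI allI impI)
        fix s assume "s > y"
        have "v x \<le> s" for x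
        proof -
          have "x \<in> ?A y" using True by blast
          then show ?thesis using \<open>s > y\<close> by simp
        qed
        then have "?A s = UNIV" by auto
        then show "?\<psi> s = 1" using fG[of s] hatFD_D(4)[OF d] by simp
      qed simp
      then have "(?\<psi> \<longlongrightarrow> 1) (at_right y)" by (rule tendsto_eventually)
      then have "TD d (TU v G) y = 1" using tendsto_unique[OF _ lim] by force
      then show ?thesis using fH ne True by simp
    next
      case nu: False
      define a where "a = Sup (?A y)"
      have Aeq: "?A y = {..a}" unfolding a_def by (rule downset_closed(1)[OF mv lc ne nu])
      have va: "v a \<le> y" using Aeq by auto
      let ?\<phi> = "\<lambda>s. d (G s)"
      define L where "L = TD d G a"
      have limphi: "(?\<phi> \<longlongrightarrow> L) (at_right a)" unfolding L_def by (rule TD_lim[OF G d])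
      have phiL: "L \<le> ?\<phi> s" if "s > a" for s
      proof (rule tendsto_upperbound[OF limphi])
        show "eventually (\<lambda>t. ?\<phi> s \<ge> ?\<phi> t) (at_right a)"
          unfolding eventually_at_right_field using that dG_mono(1)[OF G d]
          by (auto intro!: exI[of _ s])
      qed simp
      have "(?\<psi> \<longlongrightarrow> L) (at_right y)"
      proof (rule mono_rlim_char)
        show "?\<psi> s \<le> ?\<psi> t" if "y < s" "s \<le> t" for s t
          using dG_mono(1)[OF VG d] that by auto
        show "L \<le> ?\<psi> s" if "s > y" for s
        proof (cases "?A s = UNIV")
          case True
          have "L \<le> ?\<phi> (a+1)" by (rule phiL) simp
          also have "\<dots> \<le> 1" using dG_mono(3)[OF G d] by simp
          finally show ?thesis using fG[of s] True hatFD_D(4)[OF d] by simp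
        next
          case False
          have "eventually (\<lambda>z. dist (v z) (v a) < s - y) (at_right a)"
            using cv that by (intro tendstoD) (auto simp: continuous_on_eq_continuous_within continuous_within
                       intro: tendsto_within_subset)
          then obtain b where b: "b > a" "\<And>z. z > a \<Longrightarrow> z < b \<Longrightarrow> dist (v z) (v a) < s - y"
            by (auto simp: eventually_at_right_field)
          define z where "z = (a + b) / 2"
          have z: "z > a" "v z \<le> s" using b(2)[of z] va b(1) by (auto simp: z_def dist_real_def)
          then have nes: "?A s \<noteq> {}" by auto
          have Aeqs: "?A s = {..Sup (?A s)}" by (rule downset_closed(1)[OF mv lc nes False])
          then have "z \<le> Sup (?A s)" using z by auto
          then have "Sup (?A s) > a" using z by simp
          then have "L \<le> ?\<phi> (Sup (?A s))" by (rule phiL)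
          moreover have "TU v G s = G (Sup (?A s))" using fG[of s] by (simp only: if_not_P[OF nes] if_not_P[OF False])
          ultimately show ?thesis by simp
        qed
        show "\<exists>s>y. ?\<psi> s < L + \<epsilon>" if "\<epsilon> > 0" for \<epsilon>
        proof -
          have "eventually (\<lambda>t. dist (?\<phi> t) L < \<epsilon>) (at_right a)" using limphi that by (rule tendstoD)
          then obtain b where b: "b > a" "\<And>t. t > a \<Longrightarrow> t < b \<Longrightarrow> dist (?\<phi> t) L < \<epsilon>"
            by (auto simp: eventually_at_right_field)
          define z where "z = (a + b) / 2"
          have z1: "z > a" "z < b" using b(1) by (auto simp: z_def)
          have z: "z > a" "?\<phi> z < L + \<epsilon>" using z1 b(2)[OF z1] by (auto simp: dist_real_def)
          have vz: "v z > y"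
          proof (rule ccontr)
            assume "\<not> v z > y" then have "z \<in> ?A y" by simp
            then have "z \<le> a" using Aeq by blast
            then show False using z(1) by simp
          qed
          define s where "s = (y + v z) / 2"
          have s: "s > y" "s < v z" using vz by (auto simp: s_def)
          have "a \<in> ?A s" using va s by auto
          then have nes: "?A s \<noteq> {}" by auto
          have "z \<notin> ?A s" using s by auto
          then have nus: "?A s \<noteq> UNIV" by auto
          have "Sup (?A s) \<le> z"
          proof (rule cSup_least)
            show "?A s \<noteq> {}" by fact
            fix w assume "w \<in> ?A s"
            then have "v w < v z" using s by auto
            show "w \<le> z"
            proof (rule ccontr)
              assume "\<not> w \<le> z" then have "v z \<le> v w" using mv by (simp add: mono_def)
              then show False using \<open>v w < v z\<close> by simp
            qed
          qed
          then have "?\<phi> (Sup (?A s)) \<le> ?\<phi> z" using dG_mono(1)[OF G d] by auto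
          moreover have "TU v G s = G (Sup (?A s))" using fG[of s] by (simp only: if_not_P[OF nes] if_not_P[OF nus])
          ultimately have "?\<psi> s < L + \<epsilon>" using z by simp
          then show ?thesis using s by auto
        qed
      qed
      then have "TD d (TU v G) y = L" using tendsto_unique[OF _ lim] by force
      moreover have "TU v (TD d G) y = TD d G a" unfolding a_def using fH by (simp only: if_not_P[OF ne] if_not_P[OF nu])
      ultimately show ?thesis unfolding L_def by simp
    qed
  qed
qed




lemma sm_surj_cont:
  fixes u :: "real \<Rightarrow> real"
  assumes sm: "strict_mono u" and su: "surj u"
  shows "continuous_on UNIV u"
proof -
  have nd: "\<And>x y. x \<le> y \<Longrightarrow> u x \<le> u y" using sm by (simp add: strict_mono_less_eq)
  have lt: "b < a" if "u b < u a" for a b using sm that by (metis not_le nd)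
  have "isCont u a" for a
  proof -
    have r0: "\<forall>\<epsilon>>0. \<exists>\<delta>>0. u (a + \<delta>) - u a < \<epsilon>"
    proof (intro allI impI)
      fix \<epsilon> :: real assume "\<epsilon> > 0"
      obtain b where b: "u b = u a + \<epsilon>/2" using su by (metis surj_def)
      then have "a < b" using lt[of a b] \<open>\<epsilon> > 0\<close> by simp
      then show "\<exists>\<delta>>0. u (a + \<delta>) - u a < \<epsilon>" using b \<open>\<epsilon> > 0\<close> by (intro exI[of _ "b - a"]) auto
    qed
    have l0: "\<forall>\<epsilon>>0. \<exists>\<delta>>0. u a - u (a - \<delta>) < \<epsilon>"
    proof (intro allI impI)
      fix \<epsilon> :: real assume "\<epsilon> > 0"
      obtain b where b: "u b = u a - \<epsilon>/2" using su by (metis surj_def)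
      then have "b < a" using lt[of b a] \<open>\<epsilon> > 0\<close> by simp
      then show "\<exists>\<delta>>0. u a - u (a - \<delta>) < \<epsilon>" using b \<open>\<epsilon> > 0\<close> by (intro exI[of _ "a - b"]) auto
    qed
    have r: "continuous (at_right a) u" using continuous_at_right_real_increasing[of u a] nd r0 by blast
    have l: "continuous (at_left a) u" using continuous_at_left_real_increasing[of u a] nd l0 by blast
    show ?thesis using l r by (simp add: continuous_at_split)
  qed
  then show ?thesis by (simp add: continuous_on_eq_continuous_at)
qed

lemma sm_surj_inv:
  fixes u :: "real \<Rightarrow> real"
  assumes sm: "strict_mono u" and su: "surj u"
  shows "\<And>y. u (inv u y) = y" "\<And>x. inv u (u x) = x" "strict_mono (inv u)" "surj (inv u)"
proof -
  show ui: "\<And>y. u (inv u y) = y" using su by (simp add: surj_f_inv_f)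
  have inj: "inj u" using sm by (rule strict_mono_imp_inj_on)
  show iu: "\<And>x. inv u (u x) = x" using inj by simp
  show "strict_mono (inv u)"
    unfolding strict_mono_def
  proof (intro allI impI)
    fix x y :: real assume "x < y"
    show "inv u x < inv u y"
    proof (rule ccontr)
      assume "\<not> inv u x < inv u y"
      then have "u (inv u y) \<le> u (inv u x)" using sm by (simp add: strict_mono_less_eq)
      then show False using ui \<open>x < y\<close> by simp
    qed
  qed
  show "surj (inv u)" using iu by (metis surjI)
qed

lemma sm_mono: "strict_mono (u::real\<Rightarrow>real) \<Longrightarrow> mono u"
  by (simp add: strict_mono_mono)

lemma mono_comp3: "mono (a::real\<Rightarrow>real) \<Longrightarrow> mono b \<Longrightarrow> mono c \<Longrightarrow> mono (a \<circ> b \<circ> c)"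
  by (simp add: mono_def)

lemma cont_comp3: "continuous_on UNIV (a::real\<Rightarrow>real) \<Longrightarrow> continuous_on UNIV (b::real\<Rightarrow>real) \<Longrightarrow> continuous_on UNIV (c::real\<Rightarrow>real)
   \<Longrightarrow> continuous_on UNIV (a \<circ> b \<circ> c)"
proof -
  assume A: "continuous_on UNIV a" and B: "continuous_on UNIV b" and C: "continuous_on UNIV c"
  have "isCont (a \<circ> b \<circ> c) x" for x
  proof -
    have "isCont c x" "isCont b (c x)" "isCont a ((b \<circ> c) x)"
      using A B C by (auto simp: continuous_on_eq_continuous_at)
    then show ?thesis by (simp add: continuous_at_compose o_assoc[symmetric])
  qed
  then show ?thesis by (simp add: continuous_on_eq_continuous_at comp_def)
qed

lemma part1_key:
  assumes T01: "\<forall>F\<in>M0. T F \<in> M0" and d: "d \<in> hatFD" and mu: "mono u"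
    and Teq: "\<forall>F\<in>M0. T F = TD d (TU u F)"
    and mv: "mono v" and cv: "continuous_on UNIV v" and mw: "mono w"
    and uw: "u \<circ> w = v \<circ> u" and F: "F \<in> M0"
  shows "TU v (T F) = T (TU w F)"
proof -
  have mu': "u \<in> borel_measurable borel" and mv': "v \<in> borel_measurable borel" and mw': "w \<in> borel_measurable borel"
    using mu mv mw by (auto intro: mono_meas)
  have WF: "TU w F \<in> M0" by (rule TU_M0[OF F mw'])
  have UF: "TU u F \<in> M0" by (rule TU_M0[OF F mu'])
  have "T (TU w F) = TD d (TU u (TU w F))" using Teq WF by simp
  also have "\<dots> = TD d (TU (u \<circ> w) F)" by (simp add: TU_comp[OF F mw' mu'])
  also have "\<dots> = TD d (TU (v \<circ> u) F)" by (simp add: uw)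
  also have "\<dots> = TD d (TU v (TU u F))" by (simp add: TU_comp[OF F mu' mv'])
  also have "\<dots> = TU v (TD d (TU u F))"
    by (rule TU_TD_comm[symmetric, OF UF d _ mv cv]) (use T01 Teq F in auto)
  also have "\<dots> = TU v (T F)" using Teq F by simp
  finally show ?thesis by simp
qed

lemma Ucal_iff: "T' \<in> Ucal \<longleftrightarrow> (\<exists>u. T' = TU u \<and> mono u \<and> continuous_on UNIV u)"
  by (auto simp: Ucal_def)

lemma part1_bwd:
  assumes T01: "\<forall>F\<in>M0. T F \<in> M0" and d: "d \<in> hatFD" and sm: "strict_mono u" and su: "surj u"
    and Teq: "\<forall>F\<in>M0. T F = TD d (TU u F)"
  shows "comp_left Ucal T = comp_right T Ucal"
proof -
  let ?g = "inv u"
  note inv = sm_surj_inv[OF sm su]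
  have mu: "mono u" and mg: "mono ?g" using sm inv(3) by (auto intro: sm_mono)
  have cu: "continuous_on UNIV u" and cg: "continuous_on UNIV ?g"
    using sm_surj_cont[OF sm su] sm_surj_cont[OF inv(3,4)] by auto
  show ?thesis
  proof (intro equalityI subsetI)
    fix X assume "X \<in> comp_left Ucal T"
    then obtain v where X: "X = restrict (\<lambda>F. TU v (T F)) M0" and mv: "mono v" and cv: "continuous_on UNIV v"
      by (auto simp: comp_left_def Ucal_iff)
    define w where "w = ?g \<circ> v \<circ> u"
    have mw: "mono w" unfolding w_def by (rule mono_comp3[OF mg mv mu])
    have cw: "continuous_on UNIV w" unfolding w_def by (rule cont_comp3[OF cg cv cu])
    have uw: "u \<circ> w = v \<circ> u" by (auto simp: w_def inv(1))
    have "X = restrict (\<lambda>F. T (TU w F)) M0"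
      unfolding X using part1_key[OF T01 d mu Teq mv cv mw uw] by (auto simp: restrict_def)
    then show "X \<in> comp_right T Ucal" unfolding comp_right_def Ucal_iff using mw cw by blast
  next
    fix X assume "X \<in> comp_right T Ucal"
    then obtain w where X: "X = restrict (\<lambda>F. T (TU w F)) M0" and mw: "mono w" and cw: "continuous_on UNIV w"
      by (auto simp: comp_right_def Ucal_iff)
    define v where "v = u \<circ> w \<circ> ?g"
    have mv: "mono v" unfolding v_def by (rule mono_comp3[OF mu mw mg])
    have cv: "continuous_on UNIV v" unfolding v_def by (rule cont_comp3[OF cu cw cg])
    have uw: "u \<circ> w = v \<circ> u" by (auto simp: v_def inv(2))
    have "X = restrict (\<lambda>F. TU v (T F)) M0"
      unfolding X using part1_key[OF T01 d mu Teq mv cv mw uw] by (auto simp: restrict_def)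
    then show "X \<in> comp_left Ucal T" unfolding comp_left_def Ucal_iff using mv cv by blast
  qed
qed




lemma lc_comp:
  fixes e f :: "real \<Rightarrow> real"
  assumes e: "(e \<longlongrightarrow> e a) (at_left a)" and f: "(f \<longlongrightarrow> a) Fl" and le: "eventually (\<lambda>y. f y \<le> a) Fl"
  shows "((\<lambda>y. e (f y)) \<longlongrightarrow> e a) Fl"
proof (rule tendstoI)
  fix \<epsilon> :: real assume "\<epsilon> > 0"
  then have "eventually (\<lambda>t. dist (e t) (e a) < \<epsilon>) (at_left a)" using e tendstoD by blast
  then obtain b where b: "b < a" "\<And>t. t > b \<Longrightarrow> t < a \<Longrightarrow> dist (e t) (e a) < \<epsilon>"
    by (auto simp: eventually_at_left_field)
  have "eventually (\<lambda>y. dist (f y) a < a - b) Fl" using tendstoD[OF f, of "a - b"] b(1) by simp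
  then show "eventually (\<lambda>y. dist (e (f y)) (e a) < \<epsilon>) Fl"
    using le
  proof eventually_elim
    case (elim y)
    show ?case
    proof (cases "f y = a")
      case True then show ?thesis using \<open>\<epsilon> > 0\<close> by simp
    next
      case False then show ?thesis using elim b(2)[of "f y"] by (auto simp: dist_real_def)
    qed
  qed
qed

lemma M0_ev_le1: assumes "F \<in> M0" shows "eventually (\<lambda>y. F y \<le> 1) Fl"
  using M0_le1[OF assms] by simp

lemma M0_ev_ge0: assumes "F \<in> M0" shows "eventually (\<lambda>y. F y \<ge> 0) Fl"
  using M0_nonneg[OF assms] by simp

lemma TD_M0:
  assumes F: "F \<in> M0" and e: "e \<in> hatFD" and rc: "rcont e"
  shows "TD e F \<in> M0"
proof -
  have eq: "TD e F = (\<lambda>x. e (F x))" by (rule TD_rc[OF F e rc])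
  have "mono (\<lambda>x. e (F x))" using dG_mono(1)[OF F e] by (auto simp: mono_def)
  moreover have "continuous (at_right x) (\<lambda>x. e (F x))" for x
    using TD_lim[OF F e, of x] eq by (simp add: continuous_within)
  moreover have "((\<lambda>x. e (F x)) \<longlongrightarrow> 0) at_bot"
  proof -
    have "((\<lambda>x. e (F x)) \<longlongrightarrow> e 0) at_bot"
      by (rule rc_comp[of e 0 F]) (use hatFD_D(3,5)[OF e] M0D(3)[OF F] M0_ev_ge0[OF F] in auto)
    then show ?thesis using hatFD_D(3)[OF e] by simp
  qed
  moreover have "((\<lambda>x. e (F x)) \<longlongrightarrow> 1) at_top"
  proof -
    have "((\<lambda>x. e (F x)) \<longlongrightarrow> e 1) at_top"
      by (rule lc_comp[of e 1 F]) (use hatFD_D(4,6)[OF e] M0D(4)[OF F] M0_ev_le1[OF F] in auto)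
    then show ?thesis using hatFD_D(4)[OF e] by simp
  qed
  ultimately show ?thesis unfolding eq M0_def by auto
qed

lemma TU_TD_rc_comm:
  fixes u :: "real \<Rightarrow> real"
  assumes F: "F \<in> M0" and e: "e \<in> hatFD" and rc: "rcont e"
    and mu: "mono u" and lc: "\<And>x. continuous (at_left x) u"
  shows "TU u (TD e F) = TD e (TU u F)"
proof
  fix y
  have UF: "TU u F \<in> M0" by (rule TU_M0[OF F mono_meas[OF mu]])
  have EF: "TD e F \<in> M0" by (rule TD_M0[OF F e rc])
  have e1: "TD e (TU u F) y = e (TU u F y)" using TD_rc[OF UF e rc] by simp
  have e2: "TD e F = (\<lambda>x. e (F x))" by (rule TD_rc[OF F e rc])
  show "TU u (TD e F) y = TD e (TU u F) y"
    unfolding e1 TU_formula[OF EF mu lc, of y] TU_formula[OF F mu lc, of y]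
    using hatFD_D(3,4)[OF e] e2 by simp
qed

definition homeo01 :: "(real \<Rightarrow> real) \<Rightarrow> bool" where
  "homeo01 p \<longleftrightarrow> continuous_on {0..1} p \<and> strict_mono_on {0..1} p \<and> p 0 = 0 \<and> p 1 = 1"

lemma homeo01_range:
  assumes "homeo01 p" "x \<in> {0..1}" shows "p x \<in> {0..1}"
proof -
  have m: "mono_on {0..1} p" using assms(1) strict_mono_on_imp_mono_on[of "{0..1}" p] by (auto simp: homeo01_def)
  have "p 0 \<le> p x" "p x \<le> p 1" using mono_onD[OF m] assms(2) by auto
  then show ?thesis using assms(1) by (auto simp: homeo01_def)
qed

lemma homeo01_less:
  assumes "homeo01 p" "x \<in> {0..1}" "y \<in> {0..1}" "x < y" shows "p x < p y"
  using assms by (auto simp: homeo01_def strict_mono_on_def)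

lemma homeo01_le:
  assumes "homeo01 p" "x \<in> {0..1}" "y \<in> {0..1}" "x \<le> y" shows "p x \<le> p y"
  using homeo01_less[OF assms(1-3)] assms(4) by (cases "x = y") auto

lemma homeo01_right:
  assumes "homeo01 p" "x \<in> {0..<1}" shows "(p \<longlongrightarrow> p x) (at_right x)"
  using cont_rcont[of p] assms by (auto simp: homeo01_def rcont_def)

lemma homeo01_left:
  assumes "homeo01 p" "x \<in> {0<..1}" shows "(p \<longlongrightarrow> p x) (at_left x)"
proof -
  have "continuous_on {0..x} p" using assms by (auto simp: homeo01_def intro: continuous_on_subset)
  then show ?thesis by (rule continuous_on_Icc_at_leftD) (use assms in auto)
qed

lemma homeo01_hatFD: assumes "homeo01 p" shows "p \<in> hatFD"
  unfolding hatFD_def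
proof (intro CollectI conjI)
  show "mono_on {0..1} p" using homeo01_le[OF assms] by (auto simp: mono_on_def)
  show "p ` {0..1} \<subseteq> {0..1}" using homeo01_range[OF assms] by auto
  show "p 0 = 0" "p 1 = 1" using assms by (auto simp: homeo01_def)
  show "(p \<longlongrightarrow> 0) (at_right 0)" using homeo01_right[OF assms, of 0] assms by (auto simp: homeo01_def)
  show "(p \<longlongrightarrow> 1) (at_left 1)" using homeo01_left[OF assms, of 1] assms by (auto simp: homeo01_def)
qed

lemma homeo01_inv:
  assumes p: "homeo01 p"
  defines "q \<equiv> the_inv_into {0..1} p"
  shows "homeo01 q" "\<And>x. x \<in> {0..1} \<Longrightarrow> q (p x) = x" "\<And>x. x \<in> {0..1} \<Longrightarrow> p (q x) = x"
proof -
  have inj: "inj_on p {0..1}" using p by (auto simp: homeo01_def intro: strict_mono_on_imp_inj_on)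
  have img: "p ` {0..1} = {0..1}"
  proof (intro equalityI subsetI)
    fix y assume "y \<in> p ` {0..1}" then show "y \<in> {0..1}" using homeo01_range[OF p] by auto
  next
    fix y :: real assume y: "y \<in> {0..1}"
    have "\<exists>x. 0 \<le> x \<and> x \<le> 1 \<and> p x = y"
      by (rule IVT') (use y p in \<open>auto simp: homeo01_def\<close>)
    then show "y \<in> p ` {0..1}" by auto
  qed
  show qp: "\<And>x. x \<in> {0..1} \<Longrightarrow> q (p x) = x" unfolding q_def using inj by (simp add: the_inv_into_f_f)
  show pq: "\<And>x. x \<in> {0..1} \<Longrightarrow> p (q x) = x" unfolding q_def using inj img by (simp add: f_the_inv_into_f)
  have qr: "q x \<in> {0..1}" if "x \<in> {0..1}" for x
    unfolding q_def using inj img that by (intro the_inv_into_into) auto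
  have "continuous_on (p ` {0..1}) q"
    by (rule continuous_on_inv) (use p qp in \<open>auto simp: homeo01_def\<close>)
  then have c: "continuous_on {0..1} q" using img by simp
  have sm: "strict_mono_on {0..1} q"
  proof (rule strict_mono_onI)
    fix x y :: real assume xy: "x \<in> {0..1}" "y \<in> {0..1}" "x < y"
    show "q x < q y"
    proof (rule ccontr)
      assume "\<not> q x < q y"
      then have "p (q y) \<le> p (q x)" using homeo01_le[OF p qr[OF xy(2)] qr[OF xy(1)]] by simp
      then show False using pq xy by simp
    qed
  qed
  have "q 0 = 0" using qp[of 0] p by (simp add: homeo01_def)
  moreover have "q 1 = 1" using qp[of 1] p by (simp add: homeo01_def)
  ultimately show "homeo01 q" using c sm by (simp add: homeo01_def)
qed




lemma homeo_comp:
  assumes p: "homeo01 p" and q: "homeo01 q" and e: "e \<in> hatFD" and rc: "rcont e"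
  shows "(\<lambda>x. p (e (q x))) \<in> hatFD" "rcont (\<lambda>x. p (e (q x)))"
proof -
  let ?f = "\<lambda>x. p (e (q x))"
  have er: "e x \<in> {0..1}" if "x \<in> {0..1}" for x using hatFD_D(2)[OF e that] .
  have eqr: "e (q x) \<in> {0..1}" if "x \<in> {0..1}" for x using er homeo01_range[OF q that] by simp
  have q0: "q 0 = 0" and q1: "q 1 = 1" and p0: "p 0 = 0" and p1: "p 1 = 1"
    using p q by (auto simp: homeo01_def)
  show "?f \<in> hatFD"
    unfolding hatFD_def
  proof (intro CollectI conjI)
    show "mono_on {0..1} ?f"
      unfolding mono_on_def
    proof (intro allI impI)
      fix x y :: real assume "x \<in> {0..1} \<and> y \<in> {0..1} \<and> x \<le> y"
      then have "q x \<le> q y" "q x \<in> {0..1}" "q y \<in> {0..1}"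
        using homeo01_le[OF q] homeo01_range[OF q] by auto
      then have "e (q x) \<le> e (q y)" using hatFD_D(1)[OF e] by (auto simp: mono_on_def)
      then show "?f x \<le> ?f y" using homeo01_le[OF p] eqr \<open>x \<in> {0..1} \<and> y \<in> {0..1} \<and> x \<le> y\<close> by auto
    qed
    show "?f ` {0..1} \<subseteq> {0..1}" using eqr homeo01_range[OF p] by auto
    show "?f 0 = 0" "?f 1 = 1" using p0 p1 q0 q1 hatFD_D(3,4)[OF e] by auto
    show "(?f \<longlongrightarrow> 0) (at_right 0)"
    proof -
      have "(q \<longlongrightarrow> 0) (at_right 0)" using homeo01_right[OF q, of 0] q0 by simp
      moreover have "eventually (\<lambda>x. q x \<ge> 0) (at_right (0::real))"
        unfolding eventually_at_right_field
        using homeo01_range[OF q] by (intro exI[of _ 1]) auto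
      ultimately have "((\<lambda>x. e (q x)) \<longlongrightarrow> e 0) (at_right 0)"
        using hatFD_D(3,5)[OF e] rc_comp[of e 0 q "at_right 0"] by simp
      moreover have "eventually (\<lambda>x. e (q x) \<ge> 0) (at_right (0::real))"
        unfolding eventually_at_right_field
        using eqr by (intro exI[of _ 1]) auto
      ultimately have "(?f \<longlongrightarrow> p 0) (at_right 0)"
        using homeo01_right[OF p, of 0] hatFD_D(3)[OF e] rc_comp[of p 0 "\<lambda>x. e (q x)" "at_right 0"] by simp
      then show ?thesis using p0 by simp
    qed
    show "(?f \<longlongrightarrow> 1) (at_left 1)"
    proof -
      have "(q \<longlongrightarrow> 1) (at_left 1)" using homeo01_left[OF q, of 1] q1 by simp
      moreover have "eventually (\<lambda>x. q x \<le> 1) (at_left (1::real))"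
        unfolding eventually_at_left_field
        using homeo01_range[OF q] by (intro exI[of _ 0]) auto
      ultimately have "((\<lambda>x. e (q x)) \<longlongrightarrow> e 1) (at_left 1)"
        using hatFD_D(4,6)[OF e] lc_comp[of e 1 q "at_left 1"] by simp
      moreover have "eventually (\<lambda>x. e (q x) \<le> 1) (at_left (1::real))"
        unfolding eventually_at_left_field
        using eqr by (intro exI[of _ 0]) auto
      ultimately have "(?f \<longlongrightarrow> p 1) (at_left 1)"
        using homeo01_left[OF p, of 1] hatFD_D(4)[OF e] lc_comp[of p 1 "\<lambda>x. e (q x)" "at_left 1"] by simp
      then show ?thesis using p1 by simp
    qed
  qed
  show "rcont ?f"
    unfolding rcont_def
  proof
    fix x :: real assume x: "x \<in> {0..<1}"
    have qx: "q x \<in> {0..<1}" using homeo01_range[OF q, of x] homeo01_less[OF q, of x 1] x q1 by auto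
    have evq: "eventually (\<lambda>y. q y \<ge> q x) (at_right x)"
      unfolding eventually_at_right_field
      using x homeo01_le[OF q, of x] by (intro exI[of _ 1]) auto
    have "((\<lambda>y. e (q y)) \<longlongrightarrow> e (q x)) (at_right x)"
      using rc qx homeo01_right[OF q x] evq rc_comp[of e "q x" q "at_right x"] by (simp add: rcont_def)
    moreover have eve: "eventually (\<lambda>y. e (q y) \<ge> e (q x)) (at_right x)"
      unfolding eventually_at_right_field
      using x homeo01_le[OF q, of x] homeo01_range[OF q] hatFD_D(1)[OF e]
      by (intro exI[of _ 1]) (auto simp: mono_on_def)
    ultimately show "(?f \<longlongrightarrow> ?f x) (at_right x)"
    proof (cases "e (q x) = 1")
      case True
      have "eventually (\<lambda>y. ?f y = ?f x) (at_right x)"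
        unfolding eventually_at_right_field
      proof (intro exI[of _ 1] conjI allI impI)
        fix y assume y: "y > x" "y < 1"
        then have "e (q y) \<ge> e (q x)" "e (q y) \<le> 1"
          using x homeo01_le[OF q, of x y] homeo01_range[OF q] hatFD_D(1)[OF e] eqr[of y]
          by (auto simp: mono_on_def)
        then show "?f y = ?f x" using True by simp
      qed (use x in auto)
      then show ?thesis by (rule tendsto_eventually)
    next
      case False
      then have "e (q x) \<in> {0..<1}" using eqr[of x] x by auto
      then have "(p \<longlongrightarrow> p (e (q x))) (at_right (e (q x)))" by (rule homeo01_right[OF p])
      then show ?thesis using \<open>((\<lambda>y. e (q y)) \<longlongrightarrow> e (q x)) (at_right x)\<close> eve
          rc_comp[of p "e (q x)" "\<lambda>y. e (q y)" "at_right x"] by simp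
    qed
  qed
qed

lemma part2_bwd:
  fixes u :: "real \<Rightarrow> real"
  assumes T01: "\<forall>F\<in>M0. T F \<in> M0" and mu: "mono u" and lc: "\<forall>x. continuous (at_left x) u"
    and d: "d \<in> hatFD" and sm: "strict_mono_on {0..1} d" and cd: "continuous_on {0..1} d"
    and Teq: "\<forall>F\<in>M0. T F = TD d (TU u F)"
  shows "comp_left Dcal' T = comp_right T Dcal'"
proof -
  have hd: "homeo01 d" using sm cd hatFD_D(3,4)[OF d] by (simp add: homeo01_def)
  define di where "di = the_inv_into {0..1} d"
  note inv = homeo01_inv[OF hd, folded di_def]
  have rcd: "rcont d" by (rule cont_rcont[OF cd])
  have lc': "\<And>x. continuous (at_left x) u" using lc by simp
  have UF: "\<And>F. F \<in> M0 \<Longrightarrow> TU u F \<in> M0" using mu by (intro TU_M0 mono_meas)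
  have UFr: "\<And>F y. F \<in> M0 \<Longrightarrow> TU u F y \<in> {0..1}" using UF M0_nonneg M0_le1 by auto
  have Tf: "\<And>F. F \<in> M0 \<Longrightarrow> T F = (\<lambda>y. d (TU u F y))"
    using Teq TD_rc[OF UF d rcd] by simp
  have key: "TD d' (T F) = T (TD d'' F)"
    if F: "F \<in> M0" and d': "d' \<in> hatFD" "rcont d'" and d'': "d'' \<in> hatFD" "rcont d''"
      and rel: "\<And>t. t \<in> {0..1} \<Longrightarrow> d' (d t) = d (d'' t)" for F d' d''
  proof -
    have "TD d' (T F) = (\<lambda>y. d' (T F y))" using TD_rc[OF _ d'] T01 F by simp
    also have "\<dots> = (\<lambda>y. d' (d (TU u F y)))" using Tf[OF F] by simp
    also have "\<dots> = (\<lambda>y. d (d'' (TU u F y)))" using rel UFr[OF F] by simp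
    also have "\<dots> = (\<lambda>y. d (TD d'' (TU u F) y))" using TD_rc[OF UF[OF F] d''] by simp
    also have "\<dots> = (\<lambda>y. d (TU u (TD d'' F) y))" using TU_TD_rc_comm[OF F d'' mu lc'] by simp
    also have "\<dots> = T (TD d'' F)" using Tf[OF TD_M0[OF F d'']] by simp
    finally show ?thesis .
  qed
  show ?thesis
  proof (intro equalityI subsetI)
    fix X assume "X \<in> comp_left Dcal' T"
    then obtain d' where X: "X = restrict (\<lambda>F. TD d' (T F)) M0" and d': "d' \<in> hatFD" "rcont d'"
      by (auto simp: comp_left_def Dcal'_iff)
    define d'' where "d'' = (\<lambda>x. di (d' (d x)))"
    have d'': "d'' \<in> hatFD" "rcont d''" unfolding d''_def by (rule homeo_comp[OF inv(1) hd d'])+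
    have rel: "d' (d t) = d (d'' t)" if "t \<in> {0..1}" for t
      unfolding d''_def using inv(3) hatFD_D(2)[OF d'(1)] homeo01_range[OF hd that] by simp
    have "X = restrict (\<lambda>F. T (TD d'' F)) M0" unfolding X using key[OF _ d' d'' rel] by (auto simp: restrict_def)
    then show "X \<in> comp_right T Dcal'" unfolding comp_right_def Dcal'_iff using d'' by blast
  next
    fix X assume "X \<in> comp_right T Dcal'"
    then obtain d'' where X: "X = restrict (\<lambda>F. T (TD d'' F)) M0" and d'': "d'' \<in> hatFD" "rcont d''"
      by (auto simp: comp_right_def Dcal'_iff)
    define d' where "d' = (\<lambda>x. d (d'' (di x)))"
    have d': "d' \<in> hatFD" "rcont d'" unfolding d'_def by (rule homeo_comp[OF hd inv(1) d''])+
    have rel: "d' (d t) = d (d'' t)" if "t \<in> {0..1}" for t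
      unfolding d'_def using inv(2) that by simp
    have "X = restrict (\<lambda>F. TD d' (T F)) M0" unfolding X using key[OF _ d' d'' rel] by (auto simp: restrict_def)
    then show "X \<in> comp_left Dcal' T" unfolding comp_left_def Dcal'_iff using d' by blast
  qed
qed




lemma restrict_eqD: "restrict f A = restrict g A \<Longrightarrow> x \<in> A \<Longrightarrow> f x = g x"
  by (metis restrict_apply')

lemma TU_galois:
  assumes H: "H \<in> M0" and m: "w \<in> borel_measurable borel" and gal: "\<And>z. w z \<le> y \<longleftrightarrow> z \<le> w' y"
  shows "TU w H y = H (w' y)"
proof -
  have "{z. w z \<le> y} = {..w' y}" using gal by auto
  then show ?thesis using TU_eq[OF H m, of y] M0_meas_Iic[OF H] by simp
qed

lemma TU_const: assumes H: "H \<in> M0" shows "TU (\<lambda>_. c) H = delta c"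
proof
  fix y
  interpret real_distribution "interval_measure H" by (rule M0_real_dist[OF H])
  show "TU (\<lambda>_. c) H y = delta c y"
    using TU_eq[OF H, of "\<lambda>_. c" y] prob_space by (simp add: delta_def)
qed

definition K :: "real \<Rightarrow> real \<Rightarrow> real \<Rightarrow> real \<Rightarrow> real" where
  "K q x h = (\<lambda>t. if t < x then 0 else if t < x + h then q else 1)"

lemma K_M0: assumes q: "0 \<le> q" "q \<le> 1" and h: "h > 0" shows "K q x h \<in> M0"
proof -
  have "mono (K q x h)" using q h by (auto simp: mono_def K_def)
  moreover have "continuous (at_right t) (K q x h)" for t
  proof -
    have "eventually (\<lambda>s. K q x h s = K q x h t) (at_right t)"
      unfolding eventually_at_right_field
    proof (cases "t < x")
      case True then show "\<exists>b>t. \<forall>s>t. s < b \<longrightarrow> K q x h s = K q x h t"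
        by (intro exI[of _ x]) (auto simp: K_def)
    next
      case False
      show "\<exists>b>t. \<forall>s>t. s < b \<longrightarrow> K q x h s = K q x h t"
      proof (cases "t < x + h")
        case True then show ?thesis using False by (intro exI[of _ "x+h"]) (auto simp: K_def)
      next
        case False2: False then show ?thesis using False by (intro exI[of _ "t+1"]) (auto simp: K_def)
      qed
    qed
    then show ?thesis unfolding continuous_within by (rule tendsto_eventually)
  qed
  moreover have "(K q x h \<longlongrightarrow> 0) at_bot"
    by (rule tendsto_eventually) (auto simp: eventually_at_bot_linorder K_def intro!: exI[of _ "x - 1"])
  moreover have "(K q x h \<longlongrightarrow> 1) at_top"
    by (rule tendsto_eventually) (use h in \<open>auto simp: eventually_at_top_linorder K_def intro!: exI[of _ "x + h"]\<close>)
  ultimately show ?thesis by (simp add: M0_def)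
qed

definition logi :: "real \<Rightarrow> real" where "logi x = 1 / (1 + exp (- x))"

lemma logi_M0: "logi \<in> M0" and logi_pos: "0 < logi x" and logi_lt1: "logi x < 1"
proof -
  show "0 < logi x" by (simp add: logi_def add_pos_pos)
  have "1 / (1 + exp (- x)) < 1 / 1"
    by (rule divide_strict_left_mono) (auto simp: add_pos_pos)
  then show "logi x < 1" unfolding logi_def by simp
  have "mono logi" by (auto simp: mono_def logi_def add_pos_pos intro!: divide_left_mono mult_pos_pos)
  moreover have "continuous (at_right t) logi" for t
    unfolding logi_def by (intro continuous_intros) (smt (verit) exp_gt_zero)
  moreover have "(logi \<longlongrightarrow> 0) at_bot"
  proof (rule tendsto_sandwich[of "\<lambda>_. 0" _ _ exp])
    show "eventually (\<lambda>x. 0 \<le> logi x) at_bot" by (simp add: logi_def add_pos_pos less_imp_le)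
    have "logi x \<le> exp x" for x
    proof -
      have "1 / (1 + exp (- x)) \<le> 1 / exp (- x)"
        by (rule divide_left_mono) (auto simp: add_pos_pos)
      moreover have "1 / exp (- x) = exp x" by (simp add: exp_minus divide_inverse)
      ultimately show ?thesis unfolding logi_def by linarith
    qed
    then show "eventually (\<lambda>x. logi x \<le> exp x) at_bot" by simp
    show "((\<lambda>_. 0::real) \<longlongrightarrow> 0) at_bot" by simp
    show "((exp::real\<Rightarrow>real) \<longlongrightarrow> 0) at_bot" by (rule exp_at_bot)
  qed
  moreover have "(logi \<longlongrightarrow> 1) at_top"
  proof -
    have "((\<lambda>x::real. exp (- x)) \<longlongrightarrow> (0::real)) at_top"
      by (rule filterlim_compose[OF exp_at_bot filterlim_uminus_at_bot_at_top])
    then have "((\<lambda>x::real. 1 / (1 + exp (- x))) \<longlongrightarrow> (1::real) / (1 + 0)) at_top"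
      by (intro tendsto_intros) auto
    then show ?thesis by (simp add: logi_def[abs_def])
  qed
  ultimately show "logi \<in> M0" by (simp add: M0_def)
qed

lemma st_le_delta: "x \<le> y \<Longrightarrow> st_le (delta x) (delta y)"
  by (auto simp: st_le_def delta_def)

lemma delta_st_le: assumes "st_le (delta x) (delta y)" shows "x \<le> y"
proof -
  have "delta y y \<le> delta x y" using assms by (simp add: st_le_def)
  then show ?thesis by (simp add: delta_def split: if_splits)
qed

locale part1_fwd_ctx =
  fixes T :: "(real \<Rightarrow> real) \<Rightarrow> (real \<Rightarrow> real)"
  assumes T01: "\<forall>F\<in>M0. T F \<in> M0" and Tmono: "monotone_map T"
    and A: "\<And>v. mono v \<Longrightarrow> continuous_on UNIV v \<Longrightarrow>
              \<exists>w. mono w \<and> continuous_on UNIV w \<and> (\<forall>F\<in>M0. TU v (T F) = T (TU w F))"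
    and B: "\<And>w. mono w \<Longrightarrow> continuous_on UNIV w \<Longrightarrow>
              \<exists>v. mono v \<and> continuous_on UNIV v \<and> (\<forall>F\<in>M0. T (TU w F) = TU v (T F))"
begin

lemma Tst: "F \<in> M0 \<Longrightarrow> G \<in> M0 \<Longrightarrow> st_le F G \<Longrightarrow> st_le (T F) (T G)"
  using Tmono by (auto simp: monotone_map_def)

lemma const_ok: "mono (\<lambda>_::real. c::real)" "continuous_on UNIV (\<lambda>_::real. c::real)"
  by (auto simp: mono_def)

lemma hit: "\<exists>p. T (delta p) = delta c"
proof -
  obtain w where w: "mono w" "\<forall>F\<in>M0. TU (\<lambda>_. c) (T F) = T (TU w F)" using A[OF const_ok] by blast
  have e1: "TU (\<lambda>_. c) (T (delta 0)) = T (TU w (delta 0))" using w(2) delta_M0 by blast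
  have e2: "TU (\<lambda>_. c) (T (delta 0)) = delta c" by (rule TU_const) (use T01 delta_M0 in blast)
  have "delta c = T (TU w (delta 0))" using e1 e2 by simp
  also have "\<dots> = T (delta (w 0))" using TU_delta[OF mono_meas[OF w(1)]] by simp
  finally show ?thesis by (intro exI[of _ "w 0"]) simp
qed

lemma pt: "\<exists>y. T (delta x) = delta y"
proof -
  obtain v where v: "mono v" "\<forall>F\<in>M0. T (TU (\<lambda>_. x) F) = TU v (T F)" using B[OF const_ok] by blast
  obtain p where p: "T (delta p) = delta 0" using hit by blast
  have "T (delta x) = T (TU (\<lambda>_. x) (delta p))" using TU_const[OF delta_M0] by simp
  also have "\<dots> = TU v (delta 0)" using v(2) delta_M0 p by simp
  also have "\<dots> = delta (v 0)" using TU_delta[OF mono_meas[OF v(1)]] by simp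
  finally show ?thesis by blast
qed

definition u where "u x = (SOME y. T (delta x) = delta y)"

lemma Tdelta: "T (delta x) = delta (u x)"
  unfolding u_def using pt[of x] by (rule someI_ex[where P="\<lambda>y. T (delta x) = delta y"])

lemma u_mono: "mono u"
proof (rule monoI)
  fix x y :: real assume "x \<le> y"
  then have "st_le (T (delta x)) (T (delta y))" by (intro Tst delta_M0 st_le_delta)
  then show "u x \<le> u y" by (simp add: Tdelta delta_st_le)
qed

lemma u_surj: "surj u"
proof -
  have "\<exists>x. u x = c" for c using hit[of c] Tdelta delta_inj by metis
  then show ?thesis by (metis surjI)
qed

lemma u_rel: assumes "mono w" "continuous_on UNIV w"
  obtains v where "mono v" "continuous_on UNIV v" "\<forall>F\<in>M0. T (TU w F) = TU v (T F)" "\<And>z. u (w z) = v (u z)"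
proof -
  obtain v where v: "mono v" "continuous_on UNIV v" "\<forall>F\<in>M0. T (TU w F) = TU v (T F)" using B[OF assms] by blast
  have "u (w z) = v (u z)" for z
  proof -
    have "delta (u (w z)) = T (TU w (delta z))" using TU_delta[OF mono_meas[OF assms(1)]] Tdelta by simp
    also have "\<dots> = TU v (T (delta z))" using v(3) delta_M0 by simp
    also have "\<dots> = delta (v (u z))" using TU_delta[OF mono_meas[OF v(1)]] Tdelta by simp
    finally show ?thesis by (rule delta_inj)
  qed
  then show ?thesis using that v by blast
qed

lemma u_sm: "strict_mono u"
proof (rule strict_monoI)
  fix x y :: real assume xy: "x < y"
  have le: "u x \<le> u y" using u_mono xy by (simp add: mono_def)
  show "u x < u y"
  proof (rule ccontr)
    assume "\<not> u x < u y" then have eq: "u x = u y" using le by simp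
    obtain a b where ab: "u a = 0" "u b = 1" using u_surj by (metis surj_def)
    have "a < b"
    proof (rule ccontr)
      assume "\<not> a < b" then have "u b \<le> u a" using u_mono by (simp add: mono_def)
      then show False using ab by simp
    qed
    define w where "w = (\<lambda>z. a + (z - x) * ((b - a) / (y - x)))"
    have pos: "(b - a) / (y - x) > 0" using \<open>a < b\<close> xy by simp
    have mw: "mono w" unfolding mono_def
    proof (intro allI impI)
      fix z1 z2 :: real assume "z1 \<le> z2"
      then have "(z1 - x) * ((b - a) / (y - x)) \<le> (z2 - x) * ((b - a) / (y - x))"
        using pos by (intro mult_right_mono) auto
      then show "w z1 \<le> w z2" unfolding w_def by linarith
    qed
    have cw: "continuous_on UNIV w" unfolding w_def by (intro continuous_intros)
    obtain v where "\<And>z. u (w z) = v (u z)" using u_rel[OF mw cw] by blast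
    then have "u (w x) = u (w y)" using eq by simp
    moreover have "w x = a" "w y = b" using xy by (auto simp: w_def)
    ultimately show False using ab by simp
  qed
qed

definition g where "g = inv u"

lemma g_props: "\<And>y. u (g y) = y" "\<And>x. g (u x) = x" "strict_mono g" "surj g"
  "mono g" "continuous_on UNIV g" "continuous_on UNIV u" "mono u"
  using sm_surj_inv[OF u_sm u_surj] sm_surj_cont[OF u_sm u_surj] u_mono
    sm_surj_cont[of g] sm_mono[of g] unfolding g_def by auto

lemma g_meas: "g \<in> borel_measurable borel" and u_meas: "u \<in> borel_measurable borel"
  using g_props(5,8) by (auto intro: mono_meas)

definition S where "S G = T (TU g G)"

lemma TUg: "G \<in> M0 \<Longrightarrow> TU g G y = G (u y)"
proof (rule TU_galois[OF _ g_meas])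
  fix z
  have "g z \<le> y \<longleftrightarrow> u (g z) \<le> u y" using u_sm by (simp add: strict_mono_less_eq)
  then show "g z \<le> y \<longleftrightarrow> z \<le> u y" using g_props(1) by simp
qed

lemma TUg_M0: "G \<in> M0 \<Longrightarrow> TU g G \<in> M0" by (rule TU_M0[OF _ g_meas])

lemma S_M0: "G \<in> M0 \<Longrightarrow> S G \<in> M0" unfolding S_def using T01 TUg_M0 by blast

lemma S_mono: "G \<in> M0 \<Longrightarrow> H \<in> M0 \<Longrightarrow> st_le G H \<Longrightarrow> st_le (S G) (S H)"
  unfolding S_def by (intro Tst TUg_M0) (auto simp: st_le_def TUg)

lemma S_delta: "S (delta x) = delta x"
  unfolding S_def using TU_delta[OF g_meas] Tdelta g_props(1) by simp

lemma S_comm: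
  assumes G: "G \<in> M0" and mw: "mono w" and cw: "continuous_on UNIV w"
  shows "S (TU w G) = TU w (S G)"
proof -
  define w' where "w' = g \<circ> w \<circ> u"
  have mw': "mono w'" unfolding w'_def by (rule mono_comp3[OF g_props(5) mw g_props(8)])
  have cw': "continuous_on UNIV w'" unfolding w'_def by (rule cont_comp3[OF g_props(6) cw g_props(7)])
  obtain v where v: "\<forall>F\<in>M0. T (TU w' F) = TU v (T F)" "\<And>z. u (w' z) = v (u z)"
    using u_rel[OF mw' cw'] by blast
  have vw: "v = w"
  proof
    fix y
    have "v y = v (u (g y))" using g_props(1) by simp
    also have "\<dots> = u (w' (g y))" using v(2) by simp
    also have "\<dots> = w y" using g_props(1) by (simp add: w'_def)
    finally show "v y = w y" .
  qed
  have mw'' : "w \<in> borel_measurable borel" "w' \<in> borel_measurable borel" using mw mw' by (auto intro: mono_meas)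
  have "S (TU w G) = T (TU (g \<circ> w) G)" unfolding S_def by (simp add: TU_comp[OF G mw''(1) g_meas])
  also have "g \<circ> w = w' \<circ> g" by (auto simp: w'_def g_props(1))
  also have "T (TU (w' \<circ> g) G) = T (TU w' (TU g G))" by (simp add: TU_comp[OF G g_meas mw''(2)])
  also have "\<dots> = TU v (T (TU g G))" using v(1) TUg_M0[OF G] by simp
  finally show ?thesis by (simp add: vw S_def)
qed

definition d where "d p = S (K p 0 1) 0"

lemma affine_TU:
  assumes H: "H \<in> M0" and h: "h > 0"
  shows "TU (\<lambda>z. x + h * z) H = (\<lambda>y. H ((y - x) / h))"
proof
  fix y
  have m: "(\<lambda>z. x + h * z) \<in> borel_measurable borel" by measurable
  show "TU (\<lambda>z. x + h * z) H y = H ((y - x) / h)"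
    by (rule TU_galois[OF H m]) (use h in \<open>simp add: field_simps\<close>)
qed

lemma s1: assumes q: "0 \<le> q" "q \<le> 1" and h: "h > 0" shows "S (K q x h) x = d q"
proof -
  have mw: "mono (\<lambda>z. x + h * z)" using h by (auto simp: mono_def)
  have cw: "continuous_on UNIV (\<lambda>z. x + h * z)" by (intro continuous_intros)
  have K01: "K q 0 1 \<in> M0" using K_M0 q by simp
  have "TU (\<lambda>z. x + h * z) (K q 0 1) = K q x h"
    unfolding affine_TU[OF K01 h] using h by (auto simp: K_def field_simps)
  then have "S (K q x h) = TU (\<lambda>z. x + h * z) (S (K q 0 1))" using S_comm[OF K01 mw cw] by simp
  also have "\<dots> = (\<lambda>y. S (K q 0 1) ((y - x) / h))" by (rule affine_TU[OF S_M0[OF K01] h])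
  finally show ?thesis by (simp add: d_def)
qed

definition clamp :: "real \<Rightarrow> real \<Rightarrow> real \<Rightarrow> real" where "clamp a b z = min (max z a) b"

lemma clamp_TU:
  assumes H: "H \<in> M0" and ab: "a < b"
  shows "TU (clamp a b) H = (\<lambda>t. if t < a then 0 else if t < b then H t else 1)"
proof
  fix t
  interpret real_distribution "interval_measure H" by (rule M0_real_dist[OF H])
  have m: "clamp a b \<in> borel_measurable borel" unfolding clamp_def by measurable
  have e: "TU (clamp a b) H t = prob {z. clamp a b z \<le> t}" by (rule TU_eq[OF H m])
  show "TU (clamp a b) H t = (if t < a then 0 else if t < b then H t else 1)"
  proof (cases "t < a")
    case True
    then have "{z. clamp a b z \<le> t} = {}" using ab by (auto simp: clamp_def)
    then show ?thesis using e True by simp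
  next
    case False
    show ?thesis
    proof (cases "t < b")
      case True
      then have "{z. clamp a b z \<le> t} = {..t}" using ab False by (auto simp: clamp_def)
      then show ?thesis using e True False M0_meas_Iic[OF H] by simp
    next
      case False2: False
      then have "{z. clamp a b z \<le> t} = UNIV" using ab by (auto simp: clamp_def)
      then show ?thesis using e False False2 prob_space by simp
    qed
  qed
qed

lemma clamp_ok: "a < b \<Longrightarrow> mono (clamp a b)" "continuous_on UNIV (clamp a b)"
  unfolding clamp_def by (auto simp: mono_def intro!: continuous_intros)

lemma S_clamp:
  assumes G: "G \<in> M0" and xy: "x < y"
  shows "S G x = S (TU (clamp x y) G) x"
proof -
  have "S (TU (clamp x y) G) = TU (clamp x y) (S G)" using S_comm[OF G clamp_ok(1)[OF xy] clamp_ok(2)] by simp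
  then show ?thesis using clamp_TU[OF S_M0[OF G] xy] xy by simp
qed

lemma s3: assumes G: "G \<in> M0" shows "d (G x) \<le> S G x"
proof -
  have xy: "x < x + 1" by simp
  let ?Gc = "TU (clamp x (x+1)) G"
  have GcM: "?Gc \<in> M0" by (rule TU_M0[OF G mono_meas[OF clamp_ok(1)[OF xy]]])
  have KM: "K (G x) x 1 \<in> M0" using K_M0 M0_nonneg[OF G] M0_le1[OF G] by simp
  have "st_le ?Gc (K (G x) x 1)"
    unfolding st_le_def clamp_TU[OF G xy] K_def using M0D(1)[OF G] by (auto simp: mono_def)
  then have "st_le (S ?Gc) (S (K (G x) x 1))" by (rule S_mono[OF GcM KM])
  then have "S ?Gc x \<ge> S (K (G x) x 1) x" by (simp add: st_le_def)
  then show ?thesis using s1[of "G x" 1 x] M0_nonneg[OF G] M0_le1[OF G] S_clamp[OF G xy] by simp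
qed

lemma s4: assumes G: "G \<in> M0" and xy: "x < y" shows "S G x \<le> d (G y)"
proof -
  let ?Gc = "TU (clamp x y) G"
  have GcM: "?Gc \<in> M0" by (rule TU_M0[OF G mono_meas[OF clamp_ok(1)[OF xy]]])
  have h: "y - x > 0" using xy by simp
  have KM: "K (G y) x (y - x) \<in> M0" using K_M0[OF _ _ h] M0_nonneg[OF G] M0_le1[OF G] by simp
  have "st_le (K (G y) x (y - x)) ?Gc"
    unfolding st_le_def clamp_TU[OF G xy] K_def using M0D(1)[OF G] by (auto simp: mono_def)
  then have "st_le (S (K (G y) x (y - x))) (S ?Gc)" by (rule S_mono[OF KM GcM])
  then have "S ?Gc x \<le> S (K (G y) x (y - x)) x" by (simp add: st_le_def)
  then show ?thesis using s1[of "G y" "y - x" x] h M0_nonneg[OF G] M0_le1[OF G] S_clamp[OF G xy] by simp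
qed

lemma d_range: "0 \<le> p \<Longrightarrow> p \<le> 1 \<Longrightarrow> d p \<in> {0..1}"
  unfolding d_def using S_M0[OF K_M0[of p 1 0]] M0_nonneg M0_le1 by auto

lemma d_mono: "0 \<le> p \<Longrightarrow> p \<le> q \<Longrightarrow> q \<le> 1 \<Longrightarrow> d p \<le> d q"
proof -
  assume pq: "0 \<le> p" "p \<le> q" "q \<le> 1"
  have "st_le (K q 0 1) (K p 0 1)" using pq by (auto simp: st_le_def K_def)
  then have "st_le (S (K q 0 1)) (S (K p 0 1))" using pq by (intro S_mono K_M0) auto
  then show "d p \<le> d q" by (simp add: st_le_def d_def)
qed

lemma d0: "d 0 = 0"
proof -
  have "K 0 0 1 = delta 1" by (auto simp: K_def delta_def)
  then show ?thesis using S_delta by (simp add: d_def delta_def)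
qed

lemma d1: "d 1 = 1"
proof -
  have "K 1 0 1 = delta 0" by (auto simp: K_def delta_def)
  then show ?thesis using S_delta by (simp add: d_def delta_def)
qed

lemma d_hatFD: "d \<in> hatFD"
  unfolding hatFD_def
proof (intro CollectI conjI)
  show "mono_on {0..1} d" by (auto simp: mono_on_def intro: d_mono)
  show "d ` {0..1} \<subseteq> {0..1}" using d_range by auto
  show "d 0 = 0" "d 1 = 1" by (rule d0, rule d1)
  have SL: "S logi \<in> M0" by (rule S_M0[OF logi_M0])
  show "(d \<longlongrightarrow> 0) (at_right 0)"
  proof (rule tendstoI)
    fix \<epsilon> :: real assume e: "\<epsilon> > 0"
    have "eventually (\<lambda>x. S logi x < \<epsilon>) at_bot" using M0D(3)[OF SL] e by (rule order_tendstoD)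
    then obtain x where x: "S logi x < \<epsilon>" by (auto simp: eventually_at_bot_linorder)
    have dx: "d (logi x) < \<epsilon>" using s3[OF logi_M0, of x] x by simp
    show "eventually (\<lambda>t. dist (d t) 0 < \<epsilon>) (at_right 0)"
      unfolding eventually_at_right_field
    proof (intro exI[of _ "logi x"] conjI allI impI)
      show "logi x > 0" by (rule logi_pos)
      fix t :: real assume t: "t > 0" "t < logi x"
      then have "t \<le> 1" using logi_lt1[of x] by simp
      then have "0 \<le> d t" "d t \<le> d (logi x)" using d_range[of t] d_mono[of t "logi x"] t logi_lt1[of x] by auto
      then show "dist (d t) 0 < \<epsilon>" using dx by simp
    qed
  qed
  show "(d \<longlongrightarrow> 1) (at_left 1)"
  proof (rule tendstoI)
    fix \<epsilon> :: real assume e: "\<epsilon> > 0"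
    have "eventually (\<lambda>x. S logi x > 1 - \<epsilon>) at_top" using M0D(4)[OF SL] e by (intro order_tendstoD) auto
    then obtain x where x: "S logi x > 1 - \<epsilon>" by (auto simp: eventually_at_top_linorder)
    have dx: "d (logi (x+1)) > 1 - \<epsilon>" using s4[OF logi_M0, of x "x+1"] x by simp
    show "eventually (\<lambda>t. dist (d t) 1 < \<epsilon>) (at_left 1)"
      unfolding eventually_at_left_field
    proof (intro exI[of _ "logi (x+1)"] conjI allI impI)
      show "logi (x+1) < 1" by (rule logi_lt1)
      fix t :: real assume t: "t > logi (x+1)" "t < 1"
      then have "t \<ge> 0" using logi_pos[of "x+1"] by simp
      then have "d t \<le> 1" "d (logi (x+1)) \<le> d t" using d_range[of t] d_mono[of "logi (x+1)" t] t logi_pos[of "x+1"] by auto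
      then show "dist (d t) 1 < \<epsilon>" using dx by (simp add: dist_real_def)
    qed
  qed
qed

lemma S_TD: assumes G: "G \<in> M0" shows "S G = TD d G"
proof
  fix x
  have "((\<lambda>y. d (G y)) \<longlongrightarrow> S G x) (at_right x)"
  proof (rule tendsto_sandwich[of "\<lambda>_. S G x" _ _ "S G"])
    show "eventually (\<lambda>y. S G x \<le> d (G y)) (at_right x)"
      by (auto simp: eventually_at_right_field intro!: exI[of _ "x+1"] s4[OF G])
    show "eventually (\<lambda>y. d (G y) \<le> S G y) (at_right x)"
      using s3[OF G] by simp
    show "((\<lambda>_. S G x) \<longlongrightarrow> S G x) (at_right x)" by simp
    show "(S G \<longlongrightarrow> S G x) (at_right x)" by (rule M0_right[OF S_M0[OF G]])
  qed
  then show "S G x = TD d G x" unfolding TD_def by (intro tendsto_Lim[symmetric]) auto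
qed

lemma result: "\<forall>F\<in>M0. T F = TD d (TU u F)"
proof
  fix F assume F: "F \<in> M0"
  have UF: "TU u F \<in> M0" by (rule TU_M0[OF F u_meas])
  have "TU g (TU u F) = TU (g \<circ> u) F" by (rule TU_comp[OF F u_meas g_meas])
  also have "g \<circ> u = (\<lambda>x. x)" using g_props(2) by auto
  also have "TU (\<lambda>x. x) F = F" by (rule TU_id[OF F])
  finally have "S (TU u F) = T F" by (simp add: S_def)
  then show "T F = TD d (TU u F)" using S_TD[OF UF] by simp
qed

end

lemma comp_left_mem: "X \<in> comp_left \<T> T \<longleftrightarrow> (\<exists>T'\<in>\<T>. X = restrict (\<lambda>F. T' (T F)) M0)"
  by (auto simp: comp_left_def)

lemma comp_right_mem: "X \<in> comp_right T \<T> \<longleftrightarrow> (\<exists>T'\<in>\<T>. X = restrict (\<lambda>F. T (T' F)) M0)"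
  by (auto simp: comp_right_def)

lemma TU_in_Ucal: "mono v \<Longrightarrow> continuous_on UNIV v \<Longrightarrow> TU v \<in> Ucal"
  by (auto simp: Ucal_def)

lemma part1_fwd:
  assumes T01: "\<forall>F\<in>M0. T F \<in> M0" and Tm: "monotone_map T"
    and eq: "comp_left Ucal T = comp_right T Ucal"
  shows "\<exists>d u. d \<in> hatFD \<and> strict_mono u \<and> surj u \<and> (\<forall>F\<in>M0. T F = TD d (TU u F))"
proof -
  have A: "\<exists>w. mono w \<and> continuous_on UNIV w \<and> (\<forall>F\<in>M0. TU v (T F) = T (TU w F))"
    if "mono v" "continuous_on UNIV v" for v
  proof -
    have "restrict (\<lambda>F. TU v (T F)) M0 \<in> comp_left Ucal T"
      unfolding comp_left_mem using TU_in_Ucal[OF that] by blast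
    then have "restrict (\<lambda>F. TU v (T F)) M0 \<in> comp_right T Ucal" using eq by simp
    then obtain T' where T': "T' \<in> Ucal" "restrict (\<lambda>F. TU v (T F)) M0 = restrict (\<lambda>F. T (T' F)) M0"
      unfolding comp_right_mem by blast
    then obtain w where w: "T' = TU w" "mono w" "continuous_on UNIV w" unfolding Ucal_iff by blast
    have "\<forall>F\<in>M0. TU v (T F) = T (TU w F)"
    proof
      fix F assume "F \<in> M0" then show "TU v (T F) = T (TU w F)" using restrict_eqD[OF T'(2)] w(1) by simp
    qed
    then show ?thesis using w by blast
  qed
  have B: "\<exists>v. mono v \<and> continuous_on UNIV v \<and> (\<forall>F\<in>M0. T (TU w F) = TU v (T F))"
    if "mono w" "continuous_on UNIV w" for w
  proof -
    have "restrict (\<lambda>F. T (TU w F)) M0 \<in> comp_right T Ucal"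
      unfolding comp_right_mem using TU_in_Ucal[OF that] by blast
    then have "restrict (\<lambda>F. T (TU w F)) M0 \<in> comp_left Ucal T" using eq by simp
    then obtain T' where T': "T' \<in> Ucal" "restrict (\<lambda>F. T (TU w F)) M0 = restrict (\<lambda>F. T' (T F)) M0"
      unfolding comp_left_mem by blast
    then obtain v where v: "T' = TU v" "mono v" "continuous_on UNIV v" unfolding Ucal_iff by blast
    have "\<forall>F\<in>M0. T (TU w F) = TU v (T F)"
    proof
      fix F assume "F \<in> M0" then show "T (TU w F) = TU v (T F)" using restrict_eqD[OF T'(2)] v(1) by simp
    qed
    then show ?thesis using v by blast
  qed
  interpret part1_fwd_ctx T by (rule part1_fwd_ctx.intro[OF T01 Tm A B])
  show ?thesis using d_hatFD u_sm u_surj result by blast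
qed




lemma M0_01_delta:
  assumes P: "P \<in> M0" and P01: "\<And>x. P x = 0 \<or> P x = 1"
  shows "\<exists>q. P = delta q"
proof -
  let ?S = "{x. P x = 1}"
  have "eventually (\<lambda>x. P x > 1/2) at_top" using M0D(4)[OF P] by (intro order_tendstoD) auto
  then obtain x1 where x1: "P x1 > 1/2" by (auto simp: eventually_at_top_linorder)
  then have ne: "x1 \<in> ?S" using P01[of x1] by auto
  have "eventually (\<lambda>x. P x < 1/2) at_bot" using M0D(3)[OF P] by (intro order_tendstoD) auto
  then obtain x0 where x0: "\<And>x. x \<le> x0 \<Longrightarrow> P x < 1/2" by (auto simp: eventually_at_bot_linorder)
  have bdd: "bdd_below ?S"
  proof (rule bdd_belowI[of _ x0])
    fix x assume "x \<in> ?S" then show "x0 \<le> x" using x0[of x] by force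
  qed
  define q where "q = Inf ?S"
  have mP: "mono P" by (rule M0D(1)[OF P])
  have gt: "P y = 1" if "y > q" for y
  proof -
    have ne': "?S \<noteq> {}" using ne by blast
    have "\<exists>s\<in>?S. s < y" using cInf_less_iff[OF ne' bdd, of y] that unfolding q_def by blast
    then obtain s where s: "s \<in> ?S" "s < y" by blast
    then have "P s \<le> P y" using monoD[OF mP, of s y] s(2) by simp
    then show ?thesis using s M0_le1[OF P, of y] by simp
  qed
  have Pq: "P q = 1"
  proof -
    have "eventually (\<lambda>y. P y = 1) (at_right q)"
      unfolding eventually_at_right_field using gt by (intro exI[of _ "q+1"]) auto
    then have "(P \<longlongrightarrow> 1) (at_right q)" by (rule tendsto_eventually)
    then show ?thesis using tendsto_unique[OF _ M0_right[OF P, of q]] by force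
  qed
  have "P = delta q"
  proof
    fix x show "P x = delta q x"
    proof (cases "q \<le> x")
      case True
      then have "P q \<le> P x" using mP by (simp add: mono_def)
      then show ?thesis using True Pq M0_le1[OF P, of x] by (simp add: delta_def)
    next
      case False
      have "x \<notin> ?S"
      proof
        assume "x \<in> ?S" then have "q \<le> x" unfolding q_def by (rule cInf_lower[OF _ bdd])
        then show False using False by simp
      qed
      then show ?thesis using False P01[of x] by (simp add: delta_def)
    qed
  qed
  then show ?thesis by blast
qed

definition s :: "real \<Rightarrow> real \<Rightarrow> real" where "s p = (\<lambda>t. if p \<le> t then 1 else 0)"

lemma s_hatFD: assumes p: "0 < p" "p < 1" shows "s p \<in> hatFD" "rcont (s p)"
proof -
  show "s p \<in> hatFD" unfolding hatFD_def
  proof (intro CollectI conjI)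
    show "mono_on {0..1} (s p)" by (auto simp: mono_on_def s_def)
    show "s p ` {0..1} \<subseteq> {0..1}" by (auto simp: s_def)
    show "s p 0 = 0" "s p 1 = 1" using p by (auto simp: s_def)
    show "(s p \<longlongrightarrow> 0) (at_right 0)"
      by (rule tendsto_eventually) (use p in \<open>auto simp: eventually_at_right_field s_def intro!: exI[of _ p]\<close>)
    show "(s p \<longlongrightarrow> 1) (at_left 1)"
      by (rule tendsto_eventually) (use p in \<open>auto simp: eventually_at_left_field s_def intro!: exI[of _ p]\<close>)
  qed
  show "rcont (s p)" unfolding rcont_def
  proof
    fix x :: real assume x: "x \<in> {0..<1}"
    have "eventually (\<lambda>t. s p t = s p x) (at_right x)"
      unfolding eventually_at_right_field
    proof (cases "p \<le> x")
      case True then show "\<exists>b>x. \<forall>y>x. y < b \<longrightarrow> s p y = s p x"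
        by (intro exI[of _ "x+1"]) (auto simp: s_def)
    next
      case False then show "\<exists>b>x. \<forall>y>x. y < b \<longrightarrow> s p y = s p x"
        by (intro exI[of _ p]) (auto simp: s_def)
    qed
    then show "(s p \<longlongrightarrow> s p x) (at_right x)" by (rule tendsto_eventually)
  qed
qed

lemma TD_s_delta:
  assumes F: "F \<in> M0" and p: "0 < p" "p < 1"
  shows "\<exists>q. TD (s p) F = delta q"
proof (rule M0_01_delta)
  show "TD (s p) F \<in> M0" by (rule TD_M0[OF F s_hatFD[OF p]])
  show "TD (s p) F x = 0 \<or> TD (s p) F x = 1" for x
    using TD_rc[OF F s_hatFD[OF p]] by (simp add: s_def)
qed

lemma not_delta_s:
  assumes H: "H \<in> M0" and ne: "H \<noteq> delta c"
  shows "\<exists>r. 0 < r \<and> r < 1 \<and> (\<lambda>y. s r (H y)) \<noteq> delta c"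
proof -
  obtain y0 where y0: "H y0 \<noteq> delta c y0" using ne by blast
  show ?thesis
  proof (cases "c \<le> y0")
    case True
    then have "H y0 < 1" using y0 M0_le1[OF H, of y0] by (simp add: delta_def)
    define r where "r = (H y0 + 1) / 2"
    have r: "0 < r" "r < 1" "H y0 < r" using M0_nonneg[OF H, of y0] \<open>H y0 < 1\<close> by (auto simp: r_def)
    have "s r (H y0) \<noteq> delta c y0" using r True by (simp add: s_def delta_def)
    then have "(\<lambda>y. s r (H y)) \<noteq> delta c" by (auto dest: fun_cong[where x=y0])
    then show ?thesis using r by blast
  next
    case False
    then have "H y0 > 0" using y0 M0_nonneg[OF H, of y0] by (simp add: delta_def)
    define r where "r = H y0 / 2"
    have r: "0 < r" "r < 1" "r \<le> H y0" using \<open>H y0 > 0\<close> M0_le1[OF H, of y0] by (auto simp: r_def)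
    have "s r (H y0) \<noteq> delta c y0" using r False by (simp add: s_def delta_def)
    then have "(\<lambda>y. s r (H y)) \<noteq> delta c" by (auto dest: fun_cong[where x=y0])
    then show ?thesis using r by blast
  qed
qed

lemma mono_surj_cont01:
  fixes d :: "real \<Rightarrow> real"
  assumes sm: "strict_mono_on {0..1} d" and img: "d ` {0..1} = {0..1}"
  shows "continuous_on {0..1} d"
  unfolding continuous_on_def
proof
  fix x :: real assume x: "x \<in> {0..1}"
  have less: "\<And>a b. a \<in> {0..1} \<Longrightarrow> b \<in> {0..1} \<Longrightarrow> d a < d b \<Longrightarrow> a < b"
    using sm by (metis linorder_not_less order_less_asym strict_mono_on_def dual_order.order_iff_strict)
  have dr: "\<And>y. y \<in> {0..1} \<Longrightarrow> d y \<in> {0..1}" using img by auto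
  have dx: "d x \<in> {0..1}" using x img by auto
  show "(d \<longlongrightarrow> d x) (at x within {0..1})"
  proof (rule order_tendstoI)
    fix a assume a: "a < d x"
    show "eventually (\<lambda>y. a < d y) (at x within {0..1})"
    proof (cases "a < 0")
      case True
      have "\<forall>y. y \<in> {0..1} \<longrightarrow> a < d y" using True dr by fastforce
      then show ?thesis unfolding eventually_at_filter by (auto intro!: always_eventually)
    next
      case False
      then have "a \<in> {0..1}" using a dx by auto
      then obtain r where r: "r \<in> {0..1}" "d r = a" using img by (metis imageE)
      then have "r < x" using less[OF r(1) x] a by simp
      have "eventually (\<lambda>y. r < y) (at x within {0..1})"
        using order_tendstoD(1)[OF tendsto_ident_at[of x "{0..1}"] \<open>r < x\<close>] by simp
      then show ?thesis unfolding eventually_at_filter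
        by (rule eventually_mono) (use r sm in \<open>auto simp: strict_mono_on_def\<close>)
    qed
  next
    fix a assume a: "d x < a"
    show "eventually (\<lambda>y. d y < a) (at x within {0..1})"
    proof (cases "a > 1")
      case True
      have "\<forall>y. y \<in> {0..1} \<longrightarrow> d y < a" using True dr by fastforce
      then show ?thesis unfolding eventually_at_filter by (auto intro!: always_eventually)
    next
      case False
      then have "a \<in> {0..1}" using a dx by auto
      then obtain r where r: "r \<in> {0..1}" "d r = a" using img by (metis imageE)
      then have "x < r" using less[OF x r(1)] a by simp
      have "eventually (\<lambda>y. y < r) (at x within {0..1})"
        using order_tendstoD(2)[OF tendsto_ident_at[of x "{0..1}"] \<open>x < r\<close>] by simp
      then show ?thesis unfolding eventually_at_filter
        by (rule eventually_mono) (use r sm in \<open>auto simp: strict_mono_on_def\<close>)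
    qed
  qed
qed




lemma Dcal'_mem: "d \<in> hatFD \<Longrightarrow> rcont d \<Longrightarrow> TD d \<in> Dcal'"
  by (auto simp: Dcal'_iff)

locale part2_fwd_ctx =
  fixes T :: "(real \<Rightarrow> real) \<Rightarrow> (real \<Rightarrow> real)"
  assumes T01: "\<forall>F\<in>M0. T F \<in> M0" and Tmono: "monotone_map T"
    and A: "\<And>d'. d' \<in> hatFD \<Longrightarrow> rcont d' \<Longrightarrow>
              \<exists>d''. d'' \<in> hatFD \<and> rcont d'' \<and> (\<forall>F\<in>M0. TD d' (T F) = T (TD d'' F))"
    and B: "\<And>d''. d'' \<in> hatFD \<Longrightarrow> rcont d'' \<Longrightarrow>
              \<exists>d'. d' \<in> hatFD \<and> rcont d' \<and> (\<forall>F\<in>M0. T (TD d'' F) = TD d' (T F))"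
begin

lemma Tst: "F \<in> M0 \<Longrightarrow> G \<in> M0 \<Longrightarrow> st_le F G \<Longrightarrow> st_le (T F) (T G)"
  using Tmono by (auto simp: monotone_map_def)

lemma TM0: "F \<in> M0 \<Longrightarrow> T F \<in> M0" using T01 by blast

lemma half: "0 < (1/2::real)" "(1/2::real) < 1" by auto

lemma pt: "\<exists>y. T (delta x) = delta y"
proof -
  obtain d'' where d'': "d'' \<in> hatFD" "\<forall>F\<in>M0. TD (s (1/2)) (T F) = T (TD d'' F)"
    using A[OF s_hatFD[OF half]] by blast
  let ?P = "T (delta x)"
  have PM: "?P \<in> M0" by (rule TM0[OF delta_M0])
  have "TD (s (1/2)) ?P = ?P" using d''(2) delta_M0 TD_delta[OF d''(1)] by simp
  then have "?P = (\<lambda>y. s (1/2) (?P y))" using TD_rc[OF PM s_hatFD[OF half]] by simp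
  then have "?P y = 0 \<or> ?P y = 1" for y by (metis s_def)
  then show ?thesis using M0_01_delta[OF PM] by blast
qed

definition u where "u x = (SOME y. T (delta x) = delta y)"

lemma Tdelta: "T (delta x) = delta (u x)"
  unfolding u_def using pt[of x] by (rule someI_ex[where P="\<lambda>y. T (delta x) = delta y"])

lemma u_mono: "mono u"
proof (rule monoI)
  fix x y :: real assume "x \<le> y"
  then have "st_le (T (delta x)) (T (delta y))" by (intro Tst delta_M0 st_le_delta)
  then show "u x \<le> u y" by (simp add: Tdelta delta_st_le)
qed

definition e where "e p = (SOME e. e \<in> hatFD \<and> rcont e \<and> (\<forall>F\<in>M0. T (TD (s p) F) = TD e (T F)))"

lemma e_props: assumes p: "0 < p" "p < 1"
  shows "e p \<in> hatFD" "rcont (e p)" "\<And>F. F \<in> M0 \<Longrightarrow> T (TD (s p) F) = TD (e p) (T F)"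
proof -
  have "\<exists>e. e \<in> hatFD \<and> rcont e \<and> (\<forall>F\<in>M0. T (TD (s p) F) = TD e (T F))"
    using B[OF s_hatFD[OF p]] by blast
  then have "e p \<in> hatFD \<and> rcont (e p) \<and> (\<forall>F\<in>M0. T (TD (s p) F) = TD (e p) (T F))"
    unfolding e_def by (rule someI_ex)
  then show "e p \<in> hatFD" "rcont (e p)" "\<And>F. F \<in> M0 \<Longrightarrow> T (TD (s p) F) = TD (e p) (T F)" by auto
qed

lemma degenerate:
  assumes uc: "\<And>x. u x = c" and F: "F \<in> M0"
  shows "T F = delta c"
proof (rule ccontr)
  let ?H = "T F"
  have HM: "?H \<in> M0" by (rule TM0[OF F])
  assume "?H \<noteq> delta c"
  then obtain r where r: "0 < r" "r < 1" "(\<lambda>y. s r (?H y)) \<noteq> delta c" using not_delta_s[OF HM] by blast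
  obtain d'' where d'': "d'' \<in> hatFD" "rcont d''" "\<forall>G\<in>M0. TD (s r) (T G) = T (TD d'' G)"
    using A[OF s_hatFD[OF r(1,2)]] by blast
  let ?F' = "TD d'' F"
  have F'M: "?F' \<in> M0" by (rule TD_M0[OF F d''(1,2)])
  have P: "T ?F' = (\<lambda>y. s r (?H y))" using d''(3) F TD_rc[OF HM s_hatFD[OF r(1,2)]] by simp
  have PM: "T ?F' \<in> M0" by (rule TM0[OF F'M])
  have P01: "T ?F' y = 0 \<or> T ?F' y = 1" for y using P by (simp add: s_def)
  obtain q where q: "TD (s (1/2)) ?F' = delta q" using TD_s_delta[OF F'M half] by blast
  have "T (TD (s (1/2)) ?F') = TD (e (1/2)) (T ?F')" by (rule e_props(3)[OF half F'M])
  also have "\<dots> = T ?F'" by (rule TD_01[OF PM P01 e_props(1)[OF half]])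
  finally have "T ?F' = delta c" using q Tdelta uc by simp
  then show False using P r(3) by simp
qed

end

definition phi :: "real \<Rightarrow> real \<Rightarrow> real \<Rightarrow> real" where
  "phi m v t = (if t \<le> v then t * (m / v) else m + (t - v) * ((1 - m) / (1 - v)))"

lemma phi_homeo:
  assumes m: "0 < m" "m < 1" and v: "0 < v" "v < 1"
  shows "homeo01 (phi m v)" "phi m v v = m"
proof -
  have k1: "m / v > 0" and k2: "(1 - m) / (1 - v) > 0" using m v by auto
  show pv: "phi m v v = m" using v by (simp add: phi_def)
  have c: "continuous_on {0..1} (phi m v)"
    unfolding phi_def[abs_def]
    by (rule continuous_on_cases_le[where h="\<lambda>t. t"]) (use v in \<open>auto intro!: continuous_intros\<close>)
  have sm: "strict_mono_on {0..1} (phi m v)"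
  proof (rule strict_mono_onI)
    fix a b :: real assume ab: "a \<in> {0..1}" "b \<in> {0..1}" "a < b"
    show "phi m v a < phi m v b"
    proof (cases "b \<le> v")
      case True
      have "a * (m / v) < b * (m / v)" using ab k1 by (intro mult_strict_right_mono) auto
      then show ?thesis using True ab by (simp add: phi_def)
    next
      case False
      show ?thesis
      proof (cases "a \<le> v")
        case True
        have "a * (m / v) \<le> v * (m / v)" using True k1 by (intro mult_right_mono) auto
        also have "\<dots> = m" using v by simp
        also have "m < m + (b - v) * ((1 - m) / (1 - v))"
        proof -
          have "(b - v) * ((1 - m) / (1 - v)) > 0" using False k2 by (intro mult_pos_pos) auto
          then show ?thesis by linarith
        qed
        finally show ?thesis using True False by (simp add: phi_def)
      next
        case False2: False
        have "(a - v) * ((1 - m) / (1 - v)) < (b - v) * ((1 - m) / (1 - v))"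
          using ab k2 by (intro mult_strict_right_mono) auto
        then show ?thesis using False False2 by (simp add: phi_def)
      qed
    qed
  qed
  have "phi m v 0 = 0" using v by (simp add: phi_def)
  moreover have "phi m v 1 = 1" using v by (simp add: phi_def)
  ultimately show "homeo01 (phi m v)" using c sm by (simp add: homeo01_def)
qed

definition unif :: "real \<Rightarrow> real \<Rightarrow> real" where
  "unif z t = max 0 (min 1 ((t - z + 1) / 2))"

lemma unif_M0: "unif z \<in> M0"
proof -
  have "mono (unif z)"
  proof (rule monoI)
    fix x y :: real assume "x \<le> y"
    then have "(x - z + 1) / 2 \<le> (y - z + 1) / 2" by (simp add: divide_right_mono)
    then show "unif z x \<le> unif z y" unfolding unif_def by (intro max.mono min.mono) auto
  qed
  moreover have "continuous (at_right t) (unif z)" for t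
    unfolding unif_def by (intro continuous_intros) auto
  moreover have "(unif z \<longlongrightarrow> 0) at_bot"
    by (rule tendsto_eventually) (auto simp: eventually_at_bot_linorder unif_def intro!: exI[of _ "z - 1"])
  moreover have "(unif z \<longlongrightarrow> 1) at_top"
    by (rule tendsto_eventually) (auto simp: eventually_at_top_linorder unif_def intro!: exI[of _ "z + 1"])
  ultimately show ?thesis by (simp add: M0_def)
qed

lemma unif_s: assumes p: "0 < p" "p < 1" shows "TD (s p) (unif z) = delta (z - 1 + 2 * p)"
proof -
  have "TD (s p) (unif z) = (\<lambda>t. s p (unif z t))" by (rule TD_rc[OF unif_M0 s_hatFD[OF p]])
  also have "\<dots> = delta (z - 1 + 2 * p)"
  proof
    fix t
    have gen: "p \<le> max 0 (min 1 w) \<longleftrightarrow> p \<le> w" for w :: real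
      using p by (cases "w \<le> 0"; cases "w \<le> 1") (auto simp: max_def min_def)
    have "p \<le> unif z t \<longleftrightarrow> p \<le> (t - z + 1) / 2" unfolding unif_def by (rule gen)
    also have "\<dots> \<longleftrightarrow> z - 1 + 2 * p \<le> t" by (auto simp: field_simps)
    finally show "s p (unif z t) = delta (z - 1 + 2 * p) t" by (simp add: s_def delta_def)
  qed
  finally show ?thesis .
qed




locale part2_nd = part2_fwd_ctx +
  fixes x0 x1 :: real
  assumes x01: "x0 < x1" and u01: "u x0 < u x1"
begin

definition Kr where "Kr r = K r x0 (x1 - x0)"

lemma Kr_M0: "0 \<le> r \<Longrightarrow> r \<le> 1 \<Longrightarrow> Kr r \<in> M0"
  unfolding Kr_def using x01 by (intro K_M0) auto

lemma Kr0: "Kr 0 = delta x1" and Kr1: "Kr 1 = delta x0"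
  using x01 by (auto simp: Kr_def K_def delta_def)

lemma TD_Kr: assumes ee: "ee \<in> hatFD" "rcont ee" and r: "0 \<le> r" "r \<le> 1"
  shows "TD ee (Kr r) = Kr (ee r)"
proof -
  have "TD ee (Kr r) = (\<lambda>t. ee (Kr r t))" by (rule TD_rc[OF Kr_M0[OF r] ee])
  also have "\<dots> = Kr (ee r)" using hatFD_D(3,4)[OF ee(1)] by (auto simp: Kr_def K_def)
  finally show ?thesis .
qed

definition dd where "dd r = T (Kr r) (u x0)"

lemma dd0: "dd 0 = 0"
proof -
  have "dd 0 = delta (u x1) (u x0)" by (simp add: dd_def Kr0 Tdelta)
  then show ?thesis using u01 by (simp add: delta_def)
qed

lemma dd1: "dd 1 = 1"
proof -
  have "dd 1 = delta (u x0) (u x0)" by (simp add: dd_def Kr1 Tdelta)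
  then show ?thesis by (simp add: delta_def)
qed

lemma dd_range: "0 \<le> r \<Longrightarrow> r \<le> 1 \<Longrightarrow> dd r \<in> {0..1}"
  unfolding dd_def using TM0[OF Kr_M0] M0_nonneg M0_le1 by auto

lemma dd_mono: "0 \<le> r \<Longrightarrow> r \<le> r' \<Longrightarrow> r' \<le> 1 \<Longrightarrow> dd r \<le> dd r'"
proof -
  assume rr: "0 \<le> r" "r \<le> r'" "r' \<le> 1"
  have "st_le (Kr r') (Kr r)" using rr by (auto simp: st_le_def Kr_def K_def)
  then have "st_le (T (Kr r')) (T (Kr r))" using rr by (intro Tst Kr_M0) auto
  then show "dd r \<le> dd r'" by (simp add: st_le_def dd_def)
qed

lemma e_rel: assumes p: "0 < p" "p < 1" and r: "0 \<le> r" "r \<le> 1"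
  shows "e p (dd r) = (if p \<le> r then 1 else 0)"
proof -
  have "T (TD (s p) (Kr r)) = TD (e p) (T (Kr r))" by (rule e_props(3)[OF p Kr_M0[OF r]])
  also have "\<dots> = (\<lambda>y. e p (T (Kr r) y))" by (rule TD_rc[OF TM0[OF Kr_M0[OF r]] e_props(1,2)[OF p]])
  finally have eq: "T (TD (s p) (Kr r)) (u x0) = e p (dd r)" by (simp add: dd_def)
  have "TD (s p) (Kr r) = Kr (s p r)" by (rule TD_Kr[OF s_hatFD[OF p] r])
  moreover have "T (Kr (s p r)) (u x0) = (if p \<le> r then 1 else 0)"
  proof (cases "p \<le> r")
    case True then have "T (Kr (s p r)) = delta (u x0)" by (simp add: s_def Kr1 Tdelta)
    then show ?thesis using True by (simp add: delta_def)
  next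
    case False then have "T (Kr (s p r)) = delta (u x1)" by (simp add: s_def Kr0 Tdelta)
    then show ?thesis using False u01 by (simp add: delta_def)
  qed
  ultimately show ?thesis using eq by simp
qed

lemma dd_sm: "strict_mono_on {0..1} dd"
proof (rule strict_mono_onI)
  fix r r' :: real assume rr: "r \<in> {0..1}" "r' \<in> {0..1}" "r < r'"
  have le: "dd r \<le> dd r'" using rr by (intro dd_mono) auto
  define p where "p = (r + r') / 2"
  have p: "0 < p" "p < 1" "r < p" "p \<le> r'" using rr by (auto simp: p_def)
  have "e p (dd r) = 0" "e p (dd r') = 1" using e_rel[OF p(1,2)] rr p by auto
  then have "dd r \<noteq> dd r'" by auto
  then show "dd r < dd r'" using le by simp
qed

lemma dd_surj: "dd ` {0..1} = {0..1}"
proof (intro equalityI subsetI)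
  fix t assume "t \<in> dd ` {0..1}" then show "t \<in> {0..1}" using dd_range by auto
next
  fix m :: real assume m: "m \<in> {0..1}"
  show "m \<in> dd ` {0..1}"
  proof (cases "m = 0 \<or> m = 1")
    case True then show ?thesis using dd0 dd1 by force
  next
    case False
    then have m01: "0 < m" "m < 1" using m by auto
    define v where "v = dd (1/2)"
    have v: "0 < v" "v < 1" using dd_sm dd0 dd1 unfolding v_def strict_mono_on_def
      by (metis atLeastAtMost_iff half(1) half(2) less_eq_real_def zero_le_one)+
    note ph = phi_homeo[OF m01 v]
    have phF: "phi m v \<in> hatFD" "rcont (phi m v)"
      using homeo01_hatFD[OF ph(1)] cont_rcont[of "phi m v"] ph(1) by (auto simp: homeo01_def)
    obtain d'' where d'': "d'' \<in> hatFD" "rcont d''" "\<forall>F\<in>M0. TD (phi m v) (T F) = T (TD d'' F)"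
      using A[OF phF] by blast
    have KM: "Kr (1/2) \<in> M0" by (rule Kr_M0) auto
    have "TD (phi m v) (T (Kr (1/2))) (u x0) = phi m v (dd (1/2))"
      using TD_rc[OF TM0[OF KM] phF] by (simp add: dd_def)
    also have "\<dots> = m" using ph(2) v_def by simp
    finally have "m = T (TD d'' (Kr (1/2))) (u x0)" using d''(3) KM by simp
    also have "TD d'' (Kr (1/2)) = Kr (d'' (1/2))" by (rule TD_Kr[OF d''(1,2)]) auto
    finally have "m = dd (d'' (1/2))" by (simp add: dd_def)
    moreover have "d'' (1/2) \<in> {0..1}" by (rule hatFD_D(2)[OF d''(1)]) auto
    ultimately show ?thesis by blast
  qed
qed

lemma dd_homeo: "homeo01 dd"
  using mono_surj_cont01[OF dd_sm dd_surj] dd_sm dd0 dd1 by (simp add: homeo01_def)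

lemma e_eq: assumes p: "0 < p" "p < 1" and t: "t \<in> {0..1}"
  shows "e p t = (if dd p \<le> t then 1 else 0)"
proof -
  obtain r where r: "r \<in> {0..1}" "t = dd r" using t dd_surj by (metis imageE)
  have "p \<le> r \<longleftrightarrow> dd p \<le> dd r"
    using homeo01_le[OF dd_homeo, of p r] homeo01_less[OF dd_homeo, of r p] r p by force
  then show ?thesis using e_rel[OF p, of r] r by auto
qed

lemma u_lc: "continuous (at_left z) u"
proof (rule ccontr)
  have nd: "\<And>x y. x \<le> y \<Longrightarrow> u x \<le> u y" using u_mono by (simp add: mono_def)
  assume "\<not> continuous (at_left z) u"
  then have "\<not> (\<forall>\<epsilon>>0. \<exists>\<delta>>0. u z - u (z - \<delta>) < \<epsilon>)"
    using continuous_at_left_real_increasing[of u z] nd by blast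
  then obtain \<epsilon> where \<epsilon>0: "\<epsilon> > 0" and \<epsilon>1: "\<forall>\<delta>>0. \<not> (u z - u (z - \<delta>) < \<epsilon>)" by blast
  have \<epsilon>: "\<epsilon> > 0" "\<And>\<delta>. \<delta> > 0 \<Longrightarrow> u z - u (z - \<delta>) \<ge> \<epsilon>" using \<epsilon>0 \<epsilon>1 by (auto simp: not_less)
  define y where "y = u z - \<epsilon> / 2"
  have below: "u x \<le> y" if "x < z" for x using \<epsilon>(2)[of "z - x"] that \<epsilon>(1) by (simp add: y_def)
  let ?G = "T (unif z)"
  have GM: "?G \<in> M0" by (rule TM0[OF unif_M0])
  have Gr: "?G y \<in> {0..1}" using M0_nonneg[OF GM] M0_le1[OF GM] by auto
  have key: "e p (?G y) = delta (u (z - 1 + 2 * p)) y" if p: "0 < p" "p < 1" for p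
  proof -
    have "T (TD (s p) (unif z)) = TD (e p) ?G" by (rule e_props(3)[OF p unif_M0])
    also have "\<dots> = (\<lambda>t. e p (?G t))" by (rule TD_rc[OF GM e_props(1,2)[OF p]])
    finally show ?thesis using unif_s[OF p] Tdelta by simp
  qed
  have ge: "dd p \<le> ?G y" if p: "0 < p" "p < 1/2" for p
  proof -
    have "z - 1 + 2 * p < z" using p by simp
    then have "delta (u (z - 1 + 2 * p)) y = 1" using below by (simp add: delta_def)
    then have "e p (?G y) = 1" using key[of p] p by simp
    then show ?thesis using e_eq[of p "?G y"] p Gr by (auto split: if_splits)
  qed
  have "dd (1/2) \<le> ?G y"
  proof (rule tendsto_upperbound[OF homeo01_left[OF dd_homeo]])
    show "eventually (\<lambda>p. dd p \<le> ?G y) (at_left (1/2))"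
      unfolding eventually_at_left_field using ge by (intro exI[of _ 0]) auto
  qed auto
  then have "e (1/2) (?G y) = 1" using e_eq[OF half Gr] by simp
  then have "delta (u z) y = 1" using key[OF half] by simp
  then have "u z \<le> y" by (simp add: delta_def split: if_splits)
  then show False using \<epsilon>(1) by (simp add: y_def)
qed

lemma result2: "\<forall>F\<in>M0. T F = TD dd (TU u F)"
proof
  fix F assume F: "F \<in> M0"
  have lc: "\<And>x. continuous (at_left x) u" by (rule u_lc)
  have UF: "TU u F \<in> M0" by (rule TU_M0[OF F mono_meas[OF u_mono]])
  have rcd: "rcont dd" using dd_homeo by (intro cont_rcont) (simp add: homeo01_def)
  have ddF: "dd \<in> hatFD" by (rule homeo01_hatFD[OF dd_homeo])
  have "T F = (\<lambda>y. dd (TU u F y))"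
  proof
    fix y
    define \<alpha> where "\<alpha> = TU u F y"
    define \<beta> where "\<beta> = T F y"
    have \<alpha>: "\<alpha> \<in> {0..1}" using M0_nonneg[OF UF] M0_le1[OF UF] by (auto simp: \<alpha>_def)
    have \<beta>: "\<beta> \<in> {0..1}" using M0_nonneg[OF TM0[OF F]] M0_le1[OF TM0[OF F]] by (auto simp: \<beta>_def)
    have rel: "(dd p \<le> \<beta>) \<longleftrightarrow> (p \<le> \<alpha>)" if p: "0 < p" "p < 1" for p
    proof -
      obtain q where q: "TD (s p) F = delta q" using TD_s_delta[OF F p] by blast
      have "T (TD (s p) F) = TD (e p) (T F)" by (rule e_props(3)[OF p F])
      also have "\<dots> = (\<lambda>t. e p (T F t))" by (rule TD_rc[OF TM0[OF F] e_props(1,2)[OF p]])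
      finally have L: "e p \<beta> = delta (u q) y" using q Tdelta by (simp add: \<beta>_def)
      have "TU u (TD (s p) F) = TD (s p) (TU u F)" by (rule TU_TD_rc_comm[OF F s_hatFD[OF p] u_mono lc])
      also have "\<dots> = (\<lambda>t. s p (TU u F t))" by (rule TD_rc[OF UF s_hatFD[OF p]])
      finally have R: "s p \<alpha> = delta (u q) y"
        using q TU_delta[OF mono_meas[OF u_mono]] by (simp add: \<alpha>_def)
      show ?thesis using L R e_eq[OF p \<beta>] by (auto simp: s_def split: if_splits)
    qed
    show "T F y = dd (TU u F y)"
    proof (rule ccontr)
      assume ne: "T F y \<noteq> dd (TU u F y)"
      then have ne': "\<beta> \<noteq> dd \<alpha>" by (simp add: \<alpha>_def \<beta>_def)
      have d\<alpha>: "dd \<alpha> \<in> {0..1}" using dd_range \<alpha> by auto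
      show False
      proof (cases "\<beta> < dd \<alpha>")
        case True
        define t where "t = (\<beta> + dd \<alpha>) / 2"
        have t: "\<beta> < t" "t < dd \<alpha>" "0 < t" "t < 1" using True \<beta> d\<alpha> by (auto simp: t_def)
        obtain p where p: "p \<in> {0..1}" "t = dd p" using t dd_surj by (metis atLeastAtMost_iff imageE less_imp_le)
        have p01: "0 < p" "p < 1" using p t dd0 dd1 by (auto simp: less_le)
        have "\<not> p \<le> \<alpha>" using rel[OF p01] p t by simp
        then have "dd \<alpha> < dd p" using homeo01_less[OF dd_homeo, of \<alpha> p] \<alpha> p by simp
        then show False using t p by simp
      next
        case False
        then have F': "dd \<alpha> < \<beta>" using ne' by simp
        define t where "t = (\<beta> + dd \<alpha>) / 2"
        have t: "dd \<alpha> < t" "t < \<beta>" "0 < t" "t < 1" using F' \<beta> d\<alpha> by (auto simp: t_def)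
        obtain p where p: "p \<in> {0..1}" "t = dd p" using t dd_surj by (metis atLeastAtMost_iff imageE less_imp_le)
        have p01: "0 < p" "p < 1" using p t dd0 dd1 by (auto simp: less_le)
        have "p \<le> \<alpha>" using rel[OF p01] p t by simp
        then have "dd p \<le> dd \<alpha>" using homeo01_le[OF dd_homeo, of p \<alpha>] \<alpha> p by simp
        then show False using t p by simp
      qed
    qed
  qed
  then show "T F = TD dd (TU u F)" using TD_rc[OF UF ddF rcd] by simp
qed

end

lemma part2_fwd:
  assumes T01: "\<forall>F\<in>M0. T F \<in> M0" and Tm: "monotone_map T"
    and eq: "comp_left Dcal' T = comp_right T Dcal'"
  shows "\<exists>d u. mono u \<and> (\<forall>x. continuous (at_left x) u)
              \<and> d \<in> hatFD \<and> strict_mono_on {0..1} d \<and> continuous_on {0..1} d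
              \<and> (\<forall>F\<in>M0. T F = TD d (TU u F))"
proof -
  have A: "\<exists>d''. d'' \<in> hatFD \<and> rcont d'' \<and> (\<forall>F\<in>M0. TD d' (T F) = T (TD d'' F))"
    if "d' \<in> hatFD" "rcont d'" for d'
  proof -
    have "restrict (\<lambda>F. TD d' (T F)) M0 \<in> comp_left Dcal' T"
      unfolding comp_left_mem using Dcal'_mem[OF that] by blast
    then have "restrict (\<lambda>F. TD d' (T F)) M0 \<in> comp_right T Dcal'" using eq by simp
    then obtain T' where T': "T' \<in> Dcal'" "restrict (\<lambda>F. TD d' (T F)) M0 = restrict (\<lambda>F. T (T' F)) M0"
      unfolding comp_right_mem by blast
    then obtain d'' where w: "T' = TD d''" "d'' \<in> hatFD" "rcont d''" unfolding Dcal'_iff by blast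
    have "\<forall>F\<in>M0. TD d' (T F) = T (TD d'' F)"
    proof
      fix F assume "F \<in> M0" then show "TD d' (T F) = T (TD d'' F)" using restrict_eqD[OF T'(2)] w(1) by simp
    qed
    then show ?thesis using w by blast
  qed
  have B: "\<exists>d'. d' \<in> hatFD \<and> rcont d' \<and> (\<forall>F\<in>M0. T (TD d'' F) = TD d' (T F))"
    if "d'' \<in> hatFD" "rcont d''" for d''
  proof -
    have "restrict (\<lambda>F. T (TD d'' F)) M0 \<in> comp_right T Dcal'"
      unfolding comp_right_mem using Dcal'_mem[OF that] by blast
    then have "restrict (\<lambda>F. T (TD d'' F)) M0 \<in> comp_left Dcal' T" using eq by simp
    then obtain T' where T': "T' \<in> Dcal'" "restrict (\<lambda>F. T (TD d'' F)) M0 = restrict (\<lambda>F. T' (T F)) M0"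
      unfolding comp_left_mem by blast
    then obtain d' where w: "T' = TD d'" "d' \<in> hatFD" "rcont d'" unfolding Dcal'_iff by blast
    have "\<forall>F\<in>M0. T (TD d'' F) = TD d' (T F)"
    proof
      fix F assume "F \<in> M0" then show "T (TD d'' F) = TD d' (T F)" using restrict_eqD[OF T'(2)] w(1) by simp
    qed
    then show ?thesis using w by blast
  qed
  interpret part2_fwd_ctx T by (rule part2_fwd_ctx.intro[OF T01 Tm A B])
  show ?thesis
  proof (cases "\<forall>x. u x = u 0")
    case True
    have hid: "homeo01 (\<lambda>t. t)" by (auto simp: homeo01_def strict_mono_on_def)
    have "\<forall>F\<in>M0. T F = TD (\<lambda>t. t) (TU (\<lambda>_. u 0) F)"
    proof
      fix F assume F: "F \<in> M0"
      have "TD (\<lambda>t. t) (TU (\<lambda>_. u 0) F) = delta (u 0)"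
        using TU_const[OF F] TD_delta[OF homeo01_hatFD[OF hid]] by simp
      then show "T F = TD (\<lambda>t. t) (TU (\<lambda>_. u 0) F)" using degenerate[of "u 0" F] True F by simp
    qed
    moreover have "mono (\<lambda>_::real. u 0)" by (simp add: mono_def)
    moreover have "\<forall>x. continuous (at_left x) (\<lambda>_::real. u 0)" by simp
    ultimately show ?thesis using homeo01_hatFD[OF hid] hid unfolding homeo01_def by blast
  next
    case False
    then obtain x where x: "u x \<noteq> u 0" by blast
    obtain a b where ab: "a < b" "u a < u b"
    proof (cases "x < 0")
      case True
      then have "u x < u 0" using x u_mono by (simp add: mono_def less_le)
      then show ?thesis using that True by blast
    next
      case False
      then have "0 < x" using x by (cases "x = 0") auto
      then have "u 0 < u x" using x u_mono by (simp add: mono_def less_le)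
      then show ?thesis using that \<open>0 < x\<close> by blast
    qed
    interpret part2_nd T a b by (rule part2_nd.intro[OF part2_fwd_ctx_axioms]) (unfold_locales; fact ab)
    have "continuous_on {0..1} dd" "strict_mono_on {0..1} dd" using dd_homeo by (auto simp: homeo01_def)
    then show ?thesis using u_mono u_lc homeo01_hatFD[OF dd_homeo] result2 by blast
  qed
qed



theorem proposition6:
  fixes T :: "(real \<Rightarrow> real) \<Rightarrow> (real \<Rightarrow> real)"
  assumes "\<forall>F\<in>M0. T F \<in> M0"
    and "monotone_map T"
  shows "(comp_left Ucal T = comp_right T Ucal \<longleftrightarrow>
           (\<exists>d u. d \<in> hatFD \<and> strict_mono u \<and> surj u
              \<and> (\<forall>F\<in>M0. T F = TD d (TU u F))))
       \<and> (comp_left Dcal' T = comp_right T Dcal' \<longleftrightarrow>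
           (\<exists>d u. mono u \<and> (\<forall>x. continuous (at_left x) u)
              \<and> d \<in> hatFD \<and> strict_mono_on {0..1} d \<and> continuous_on {0..1} d
              \<and> (\<forall>F\<in>M0. T F = TD d (TU u F))))"
proof (intro conjI iffI)
  assume "comp_left Ucal T = comp_right T Ucal"
  then show "\<exists>d u. d \<in> hatFD \<and> strict_mono u \<and> surj u \<and> (\<forall>F\<in>M0. T F = TD d (TU u F))"
    by (rule part1_fwd[OF assms])
next
  assume "\<exists>d u. d \<in> hatFD \<and> strict_mono u \<and> surj u \<and> (\<forall>F\<in>M0. T F = TD d (TU u F))"
  then obtain d u where "d \<in> hatFD" "strict_mono u" "surj u" "\<forall>F\<in>M0. T F = TD d (TU u F)" by blast
  then show "comp_left Ucal T = comp_right T Ucal" by (rule part1_bwd[OF assms(1)])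
next
  assume "comp_left Dcal' T = comp_right T Dcal'"
  then show "\<exists>d u. mono u \<and> (\<forall>x. continuous (at_left x) u)
              \<and> d \<in> hatFD \<and> strict_mono_on {0..1} d \<and> continuous_on {0..1} d
              \<and> (\<forall>F\<in>M0. T F = TD d (TU u F))"
    by (rule part2_fwd[OF assms])
next
  assume "\<exists>d u. mono u \<and> (\<forall>x. continuous (at_left x) u)
              \<and> d \<in> hatFD \<and> strict_mono_on {0..1} d \<and> continuous_on {0..1} d
              \<and> (\<forall>F\<in>M0. T F = TD d (TU u F))"
  then obtain d u where "mono u" "\<forall>x. continuous (at_left x) u" "d \<in> hatFD"
    "strict_mono_on {0..1} d" "continuous_on {0..1} d" "\<forall>F\<in>M0. T F = TD d (TU u F)" by blast
  then show "comp_left Dcal' T = comp_right T Dcal'" by (rule part2_bwd[OF assms(1)])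
qed

end
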